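(* In the setup of the context, for all $x,y,z\in B$: (a) if $\gamma_{x,y,z}\neq0$, then $t_x\sim_{\mathcal L}t_y^\ast$, $t_y\sim_{\mathcal L}t_z^\ast$ and $t_z\sim_{\mathcal L}t_x^\ast$ (left cells of $J$ with respect to the basis $(t_w)$); (b) if $t_x\sim_{\mathcal L}t_y$ in $J$, then $x\sim_{\mathcal L}y$ in $H$ (left cells of $H$ with respect to $B$); hence the partition of $B$ into $J$-left cells refines the partition into $H$-left cells; (c) the analogous statements of (b) hold for right cells and two-sided cells; (d) $t_x\sim_{\mathcal{LR}}t_x^\ast$.
   Context: Cells: for a ring $A$ acting on a module $M$ (left, right, or two-sided) which is free over the base ring $k$ with basis $C$, write $c\leftarrow c'$ if there is $h$ in $A$ (resp. a product $hc'h'$ in the bimodule case) such that $c$ occurs with nonzero coefficient in the expansion of $hc'$ (resp. $c'h$, $hc'h'$) in the basis $C$; $\preceq$ is the transitive closure of $\leftarrow$, and cells are the classes of the equivalence relation $c\sim c'\iff c\preceq c'\preceq c$. $\sim_{\mathcal L}$, $\sim_{\mathcal R}$, $\sim_{\mathcal{LR}}$ refer to the regular left, right and bimodule. Setup: $\Gamma$ totally ordered abelian group; $K$ field with surjective valuation $\nu$, valuation ring $\mathcal O$, maximal ideal $\mathfrak m$, formally real residue field $F$; $H$ finite-dimensional split semisimple symmetric $K$-algebra with trace $\tau$, $K$-linear involutive antiautomorphism $\ast$, $\ast$-symmetric basis $B$ ($B^\ast=B$, $\tau(bc^\ast)=\delta_{bc}$). With Schur elements $c_\lambda$ ($\tau=\sum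 c_\lambda^{-1}\chi_\lambda$), $a_\lambda=-\tfrac12\nu(c_\lambda)\in\Gamma$, a homomorphism $\gamma\mapsto v^\gamma$ on $\langle a_\lambda\rangle$ with $\nu(v^\gamma)=\gamma$, $f_\lambda=v^{2a_\lambda}c_\lambda$, balanced representations $\rho_\lambda$ (irreducible of type $\lambda$, $\nu(\rho_\lambda(b))\ge-a_\lambda$ for $b$ in every $\ast$-symmetric basis) and $c^\lambda(x)=v^{a_\lambda}\rho_\lambda(x)\bmod\mathfrak m$, set $\gamma_{x,y,z}=\sum_\lambda\sum_{\mathfrak{s,t,u}}f_\lambda^{-1}c^\lambda(x)_{\mathfrak{st}}c^\lambda(y)_{\mathfrak{tu}}c^\lambda(z)_{\mathfrak{us}}\in F$. $J$ is the $F$-algebra with basis $(t_x)_{x\in B}$ and product $t_xt_y=\sum_z\gamma_{x,y,z}t_{z^\ast}$, with $t_x^\ast:=t_{x^\ast}$. *)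

theory Defs
  imports Main
begin

text \<open>An algebra with finite basis indexed by the finite type 'b is represented by its
structure constants m: the product of basis elements b, c is the sum over d of m b c d times d.
Elements are coefficient vectors 'b => 'a.\<close>

definition sprod :: "('b::finite \<Rightarrow> 'b \<Rightarrow> 'b \<Rightarrow> 'a::comm_ring_1) \<Rightarrow> ('b \<Rightarrow> 'a) \<Rightarrow> ('b \<Rightarrow> 'a) \<Rightarrow> 'b \<Rightarrow> 'a" where
  "sprod m u v e = (\<Sum>b\<in>UNIV. \<Sum>c\<in>UNIV. u b * v c * m b c e)"

definition bvec :: "'b \<Rightarrow> 'b \<Rightarrow> 'a::comm_ring_1" where
  "bvec c = (\<lambda>e. if e = c then 1 else 0)"

text \<open>Elementary cell relations: c <- c' if c occurs with nonzero coefficient in h c'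
(left), c' h (right), h c' h' (two-sided), for some elements h, h' of the algebra.\<close>

definition left_step :: "('b::finite \<Rightarrow> 'b \<Rightarrow> 'b \<Rightarrow> 'a::comm_ring_1) \<Rightarrow> 'b \<Rightarrow> 'b \<Rightarrow> bool" where
  "left_step m c c' \<longleftrightarrow> (\<exists>h. sprod m h (bvec c') c \<noteq> 0)"

definition right_step :: "('b::finite \<Rightarrow> 'b \<Rightarrow> 'b \<Rightarrow> 'a::comm_ring_1) \<Rightarrow> 'b \<Rightarrow> 'b \<Rightarrow> bool" where
  "right_step m c c' \<longleftrightarrow> (\<exists>h. sprod m (bvec c') h c \<noteq> 0)"

definition lr_step :: "('b::finite \<Rightarrow> 'b \<Rightarrow> 'b \<Rightarrow> 'a::comm_ring_1) \<Rightarrow> 'b \<Rightarrow> 'b \<Rightarrow> bool" where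
  "lr_step m c c' \<longleftrightarrow> (\<exists>h h'. sprod m (sprod m h (bvec c')) h' c \<noteq> 0)"

definition cell_equiv :: "('b \<Rightarrow> 'b \<Rightarrow> bool) \<Rightarrow> 'b \<Rightarrow> 'b \<Rightarrow> bool" where
  "cell_equiv R c c' \<longleftrightarrow> R\<^sup>+\<^sup>+ c c' \<and> R\<^sup>+\<^sup>+ c' c"

definition left_cell_equiv where "left_cell_equiv m = cell_equiv (left_step m)"
definition right_cell_equiv where "right_cell_equiv m = cell_equiv (right_step m)"
definition lr_cell_equiv where "lr_cell_equiv m = cell_equiv (lr_step m)"

definition is_assoc_unital :: "('b::finite \<Rightarrow> 'b \<Rightarrow> 'b \<Rightarrow> 'a::comm_ring_1) \<Rightarrow> bool" where
  "is_assoc_unital m \<longleftrightarrow>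
     (\<forall>u v w. sprod m (sprod m u v) w = sprod m u (sprod m v w)) \<and>
     (\<exists>e. \<forall>u. sprod m e u = u \<and> sprod m u e = u)"

definition valuation :: "('k::field \<Rightarrow> 'g::linordered_ab_group_add) \<Rightarrow> bool" where
  "valuation \<nu> \<longleftrightarrow>
     (\<forall>x y. x \<noteq> 0 \<longrightarrow> y \<noteq> 0 \<longrightarrow> \<nu> (x * y) = \<nu> x + \<nu> y) \<and>
     (\<forall>x y. x \<noteq> 0 \<longrightarrow> y \<noteq> 0 \<longrightarrow> x + y \<noteq> 0 \<longrightarrow> min (\<nu> x) (\<nu> y) \<le> \<nu> (x + y)) \<and>
     (\<forall>g. \<exists>x. x \<noteq> 0 \<and> \<nu> x = g)"

definition val_ring :: "('k::field \<Rightarrow> 'g::linordered_ab_group_add) \<Rightarrow> 'k set" where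
  "val_ring \<nu> = {x. x = 0 \<or> 0 \<le> \<nu> x}"

definition max_ideal :: "('k::field \<Rightarrow> 'g::linordered_ab_group_add) \<Rightarrow> 'k set" where
  "max_ideal \<nu> = {x. x = 0 \<or> 0 < \<nu> x}"

text \<open>pi is the reduction map O -> F = O/m: a surjective ring homomorphism on O with kernel m
(its values outside O are irrelevant).\<close>

definition residue_map :: "('k::field \<Rightarrow> 'g::linordered_ab_group_add) \<Rightarrow> ('k \<Rightarrow> 'f::field) \<Rightarrow> bool" where
  "residue_map \<nu> \<pi> \<longleftrightarrow>
     (\<forall>x\<in>val_ring \<nu>. \<forall>y\<in>val_ring \<nu>. \<pi> (x + y) = \<pi> x + \<pi> y \<and> \<pi> (x * y) = \<pi> x * \<pi> y) \<and>
     \<pi> 1 = 1 \<and> \<pi> ` val_ring \<nu> = UNIV \<and>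
     (\<forall>x\<in>val_ring \<nu>. \<pi> x = 0 \<longleftrightarrow> x \<in> max_ideal \<nu>)"

definition formally_real :: "'f::field itself \<Rightarrow> bool" where
  "formally_real _ \<longleftrightarrow> \<not> (\<exists>xs::'f list. sum_list (map (\<lambda>x. x * x) xs) = - 1)"

inductive_set gen_subgroup :: "'g::ab_group_add set \<Rightarrow> 'g set" for S where
  gen_zero: "0 \<in> gen_subgroup S"
| gen_base: "x \<in> S \<Longrightarrow> x \<in> gen_subgroup S"
| gen_diff: "x \<in> gen_subgroup S \<Longrightarrow> y \<in> gen_subgroup S \<Longrightarrow> x - y \<in> gen_subgroup S"

definition starH :: "('b \<Rightarrow> 'b) \<Rightarrow> ('b \<Rightarrow> 'k) \<Rightarrow> 'b \<Rightarrow> 'k" where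
  "starH st h = (\<lambda>b. h (st b))"

definition tauH :: "('b::finite \<Rightarrow> 'k::comm_ring_1) \<Rightarrow> ('b \<Rightarrow> 'k) \<Rightarrow> 'k" where
  "tauH tau h = (\<Sum>b\<in>UNIV. h b * tau b)"

definition is_basis :: "('b::finite \<Rightarrow> 'k::field) set \<Rightarrow> bool" where
  "is_basis S \<longleftrightarrow> finite S \<and>
     (\<forall>h. \<exists>!co. (\<forall>s. s \<notin> S \<longrightarrow> co s = 0) \<and> (\<forall>b. h b = (\<Sum>s\<in>S. co s * s b)))"

definition star_sym_basis ::
  "('b::finite \<Rightarrow> 'b \<Rightarrow> 'b \<Rightarrow> 'k::field) \<Rightarrow> ('b \<Rightarrow> 'k) \<Rightarrow> ('b \<Rightarrow> 'b) \<Rightarrow> ('b \<Rightarrow> 'k) set \<Rightarrow> bool" where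
  "star_sym_basis m tau st S \<longleftrightarrow> is_basis S \<and> starH st ` S = S \<and>
     (\<forall>s\<in>S. \<forall>t\<in>S. tauH tau (sprod m s (starH st t)) = (if s = t then 1 else 0))"

definition repv :: "('b::finite \<Rightarrow> nat \<Rightarrow> nat \<Rightarrow> 'k::comm_ring_1) \<Rightarrow> ('b \<Rightarrow> 'k) \<Rightarrow> nat \<Rightarrow> nat \<Rightarrow> 'k" where
  "repv r h i j = (\<Sum>b\<in>UNIV. h b * r b i j)"

definition is_rep :: "('b::finite \<Rightarrow> 'b \<Rightarrow> 'b \<Rightarrow> 'k::comm_ring_1) \<Rightarrow> nat \<Rightarrow> ('b \<Rightarrow> nat \<Rightarrow> nat \<Rightarrow> 'k) \<Rightarrow> bool" where
  "is_rep m n r \<longleftrightarrow> (\<forall>u v i j. i < n \<longrightarrow> j < n \<longrightarrow>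
      repv r (sprod m u v) i j = (\<Sum>k<n. repv r u i k * repv r v k j))"

text \<open>Together with is_rep for every l this says that H is split
semisimple and (rho l)_l is a complete set of pairwise non-isomorphic (absolutely)
irreducible representations.\<close>
definition wedderburn ::
  "('l::finite \<Rightarrow> nat) \<Rightarrow> ('l \<Rightarrow> 'b::finite \<Rightarrow> nat \<Rightarrow> nat \<Rightarrow> 'k::comm_ring_1) \<Rightarrow> bool" where
  "wedderburn d rho \<longleftrightarrow> (\<forall>l. 0 < d l) \<and>
     (\<forall>M. \<exists>!h. \<forall>l i j. i < d l \<longrightarrow> j < d l \<longrightarrow> repv (rho l) h i j = M l i j)"

definition gammaJ ::
  "('g::linordered_ab_group_add \<Rightarrow> 'k::field) \<Rightarrow> ('k \<Rightarrow> 'f::field) \<Rightarrow> ('l::finite \<Rightarrow> 'g)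
   \<Rightarrow> ('l \<Rightarrow> 'k) \<Rightarrow> ('l \<Rightarrow> nat) \<Rightarrow> ('l \<Rightarrow> 'b \<Rightarrow> nat \<Rightarrow> nat \<Rightarrow> 'k) \<Rightarrow> 'b \<Rightarrow> 'b \<Rightarrow> 'b \<Rightarrow> 'f" where
  "gammaJ vp \<pi> a c d rho x y z =
     (\<Sum>l\<in>UNIV.
        let f = \<pi> (vp (a l + a l) * c l);
            cl = (\<lambda>w i j. \<pi> (vp (a l) * rho l w i j))
        in (\<Sum>s<d l. \<Sum>t<d l. \<Sum>u<d l. inverse f * cl x s t * cl y t u * cl z u s))"

text \<open>Structure constants of J w.r.t. the basis (t_w): t_x t_y = sum_z gamma x y z t_{z*},
so the coefficient of t_w in t_x t_y is gamma x y (w*).\<close>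
definition multJ ::
  "('g::linordered_ab_group_add \<Rightarrow> 'k::field) \<Rightarrow> ('k \<Rightarrow> 'f::field) \<Rightarrow> ('l::finite \<Rightarrow> 'g)
   \<Rightarrow> ('l \<Rightarrow> 'k) \<Rightarrow> ('l \<Rightarrow> nat) \<Rightarrow> ('l \<Rightarrow> 'b \<Rightarrow> nat \<Rightarrow> nat \<Rightarrow> 'k) \<Rightarrow> ('b \<Rightarrow> 'b)
   \<Rightarrow> 'b \<Rightarrow> 'b \<Rightarrow> 'b \<Rightarrow> 'f" where
  "multJ vp \<pi> a c d rho st x y w = gammaJ vp \<pi> a c d rho x y (st w)"

end

theory Submission
  imports Defs
begin

lemma if0_mult[simp]: "(if P then a else 0) * b = (if P then a*b else (0::'a::mult_zero))" by simp
lemma mult_if0[simp]: "b * (if P then a else 0) = (if P then b*a else (0::'a::mult_zero))" by simp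
lemma if_conj0: "(if P \<and> Q then a else 0) = (if P then (if Q then a else 0) else (0::'a::zero))" by simp
lemma sum_if_const: "(\<Sum>x\<in>A. if P then g x else 0) = (if P then sum g A else (0::'a::comm_monoid_add))" by simp

lemma repv_bvec[simp]: "repv r (bvec b) i j = r b i j"
  unfolding repv_def bvec_def by simp

lemma sum_swap_mult: "(\<Sum>j\<in>J. (\<Sum>k\<in>K. (a k::'a::comm_ring_1) * b k j) * c j) = (\<Sum>k\<in>K. a k * (\<Sum>j\<in>J. b k j * c j))"
  by (simp add: sum_distrib_left sum_distrib_right mult.assoc sum.swap[of _ J])

lemma sum_rearr_right:
  "(\<Sum>i\<in>I. \<Sum>j\<in>J. (\<Sum>k\<in>K. (a i k::'a::comm_ring_1) * b k j) * c j i) = (\<Sum>k\<in>K. \<Sum>j\<in>J. b k j * (\<Sum>i\<in>I. a i k * c j i))"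
proof -
  have "(\<Sum>i\<in>I. \<Sum>j\<in>J. (\<Sum>k\<in>K. a i k * b k j) * c j i) = (\<Sum>i\<in>I. \<Sum>j\<in>J. \<Sum>k\<in>K. b k j * (a i k * c j i))"
    by (simp add: sum_distrib_right sum_distrib_left mult_ac)
  also have "\<dots> = (\<Sum>j\<in>J. \<Sum>i\<in>I. \<Sum>k\<in>K. b k j * (a i k * c j i))" by (rule sum.swap)
  also have "\<dots> = (\<Sum>j\<in>J. \<Sum>k\<in>K. \<Sum>i\<in>I. b k j * (a i k * c j i))" by (simp add: sum.swap[of _ I])
  also have "\<dots> = (\<Sum>k\<in>K. \<Sum>j\<in>J. \<Sum>i\<in>I. b k j * (a i k * c j i))" by (rule sum.swap)
  also have "\<dots> = (\<Sum>k\<in>K. \<Sum>j\<in>J. b k j * (\<Sum>i\<in>I. a i k * c j i))" by (simp add: sum_distrib_left)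
  finally show ?thesis .
qed

lemma sum_pull4: "(\<Sum>w\<in>W. \<Sum>l\<in>L. \<Sum>i\<in>I l. \<Sum>j\<in>J l. F w l i j) = (\<Sum>l\<in>L. \<Sum>i\<in>I l. \<Sum>j\<in>J l. \<Sum>w\<in>W. (F w l i j :: 'a::comm_monoid_add))"
  by (subst sum.swap) (rule sum.cong[OF refl], subst sum.swap, rule sum.cong[OF refl], rule sum.swap)

lemma sum_pull5: "(\<Sum>w\<in>W. \<Sum>l\<in>L. \<Sum>i\<in>I l. \<Sum>j\<in>J l. \<Sum>k\<in>K l. F w l i j k) = (\<Sum>l\<in>L. \<Sum>i\<in>I l. \<Sum>j\<in>J l. \<Sum>k\<in>K l. \<Sum>w\<in>W. (F w l i j k :: 'a::comm_monoid_add))"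
  by (subst sum.swap) (rule sum.cong[OF refl], subst sum.swap, rule sum.cong[OF refl], subst sum.swap, rule sum.cong[OF refl], rule sum.swap)

lemma bilin_mult:
  fixes M :: "'b::finite \<Rightarrow> 'b \<Rightarrow> 'b \<Rightarrow> 'a::comm_ring_1"
  assumes H: "\<And>x y. (\<Sum>w\<in>UNIV. M x y w * Rb w i j) = (\<Sum>k\<in>K. Rb x i k * Rb y k j)"
  shows "repv Rb (sprod M u v) i j = (\<Sum>k\<in>K. repv Rb u i k * repv Rb v k j)"
proof -
  have "repv Rb (sprod M u v) i j = (\<Sum>w\<in>UNIV. \<Sum>x\<in>UNIV. \<Sum>y\<in>UNIV. u x * v y * (M x y w * Rb w i j))"
    unfolding repv_def sprod_def by (simp add: sum_distrib_right sum_distrib_left mult_ac)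
  also have "\<dots> = (\<Sum>x\<in>UNIV. \<Sum>y\<in>UNIV. \<Sum>w\<in>UNIV. u x * v y * (M x y w * Rb w i j))"
    by (subst sum.swap) (rule sum.cong[OF refl], rule sum.swap)
  also have "\<dots> = (\<Sum>x\<in>UNIV. \<Sum>y\<in>UNIV. u x * v y * (\<Sum>k\<in>K. Rb x i k * Rb y k j))"
    by (simp add: sum_distrib_left[symmetric] H)
  also have "\<dots> = (\<Sum>x\<in>UNIV. \<Sum>y\<in>UNIV. \<Sum>k\<in>K. (u x * Rb x i k) * (v y * Rb y k j))"
    by (simp add: sum_distrib_left mult_ac)
  also have "\<dots> = (\<Sum>k\<in>K. \<Sum>x\<in>UNIV. \<Sum>y\<in>UNIV. (u x * Rb x i k) * (v y * Rb y k j))"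
    by (subst (2) sum.swap) (subst sum.swap, rule refl)
  also have "\<dots> = (\<Sum>k\<in>K. repv Rb u i k * repv Rb v k j)"
    unfolding repv_def by (simp add: sum_product)
  finally show ?thesis .
qed

locale mrep =
  fixes M :: "'b::finite \<Rightarrow> 'b \<Rightarrow> 'b \<Rightarrow> 'a::field"
    and d :: "'l::finite \<Rightarrow> nat"
    and Rb :: "'l \<Rightarrow> 'b \<Rightarrow> nat \<Rightarrow> nat \<Rightarrow> 'a"
    and U :: "'l \<Rightarrow> nat \<Rightarrow> nat \<Rightarrow> 'b \<Rightarrow> 'a"
    and wt :: "'l \<Rightarrow> 'a"
    and st :: "'b \<Rightarrow> 'b"
  assumes mult: "i < d l \<Longrightarrow> j < d l \<Longrightarrow> repv (Rb l) (sprod M u v) i j = (\<Sum>k<d l. repv (Rb l) u i k * repv (Rb l) v k j)"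
    and units: "i < d l \<Longrightarrow> j < d l \<Longrightarrow> p < d l' \<Longrightarrow> q < d l' \<Longrightarrow>
        repv (Rb l') (U l i j) p q = (if l' = l \<and> p = i \<and> q = j then 1 else 0)"
    and coef: "u x = (\<Sum>l\<in>UNIV. wt l * (\<Sum>i<d l. \<Sum>j<d l. repv (Rb l) u i j * Rb l (st x) j i))"
    and wt_nz: "wt l \<noteq> 0"
begin

lemma mul_U_left:
  assumes "i < d l" "k < d l" "p < d l'" "q < d l'"
  shows "repv (Rb l') (sprod M (U l i k) v) p q = (if l' = l \<and> p = i then repv (Rb l) v k q else 0)"
proof -
  have "repv (Rb l') (sprod M (U l i k) v) p q = (\<Sum>r<d l'. (if l' = l \<and> p = i \<and> r = k then 1 else 0) * repv (Rb l') v r q)"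
    using assms by (simp add: mult units)
  also have "\<dots> = (if l' = l \<and> p = i then repv (Rb l) v k q else 0)"
    using assms by (auto simp: if_conj0 sum_if_const)
  finally show ?thesis .
qed

lemma mul_U_right:
  assumes "k < d l" "j < d l" "p < d l'" "q < d l'"
  shows "repv (Rb l') (sprod M v (U l k j)) p q = (if l' = l \<and> q = j then repv (Rb l) v p k else 0)"
proof -
  have "repv (Rb l') (sprod M v (U l k j)) p q = (\<Sum>r<d l'. repv (Rb l') v p r * (if l' = l \<and> r = k \<and> q = j then 1 else 0))"
    using assms by (simp add: mult units)
  also have "\<dots> = (if l' = l \<and> q = j then repv (Rb l) v p k else 0)"
    using assms by (auto simp: if_conj0 sum_if_const)
  finally show ?thesis .
qed

lemma left_iff:
  "left_step M x y \<longleftrightarrow> (\<exists>l k i. k < d l \<and> i < d l \<and> (\<Sum>j<d l. Rb l y k j * Rb l (st x) j i) \<noteq> 0)"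
proof
  assume "left_step M x y"
  then obtain h where h: "sprod M h (bvec y) x \<noteq> 0" unfolding left_step_def by blast
  show "\<exists>l k i. k < d l \<and> i < d l \<and> (\<Sum>j<d l. Rb l y k j * Rb l (st x) j i) \<noteq> 0"
  proof (rule ccontr)
    assume C: "\<not> ?thesis"
    have "sprod M h (bvec y) x = (\<Sum>l\<in>UNIV. wt l * (\<Sum>i<d l. \<Sum>j<d l. repv (Rb l) (sprod M h (bvec y)) i j * Rb l (st x) j i))"
      by (rule coef)
    also have "\<dots> = (\<Sum>l\<in>UNIV. wt l * (\<Sum>i<d l. \<Sum>j<d l. (\<Sum>k<d l. repv (Rb l) h i k * Rb l y k j) * Rb l (st x) j i))"
      by (intro sum.cong refl arg_cong2[where f="(*)"]) (simp add: mult)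
    also have "\<dots> = (\<Sum>l\<in>UNIV. wt l * (\<Sum>i<d l. \<Sum>k<d l. repv (Rb l) h i k * (\<Sum>j<d l. Rb l y k j * Rb l (st x) j i)))"
      by (simp only: sum_swap_mult)
    also have "\<dots> = 0" using C by (auto intro!: sum.neutral)
    finally show False using h by simp
  qed
next
  assume "\<exists>l k i. k < d l \<and> i < d l \<and> (\<Sum>j<d l. Rb l y k j * Rb l (st x) j i) \<noteq> 0"
  then obtain l k i where lki: "k < d l" "i < d l" "(\<Sum>j<d l. Rb l y k j * Rb l (st x) j i) \<noteq> 0" by blast
  have "sprod M (U l i k) (bvec y) x = (\<Sum>l'\<in>UNIV. wt l' * (\<Sum>p<d l'. \<Sum>q<d l'. repv (Rb l') (sprod M (U l i k) (bvec y)) p q * Rb l' (st x) q p))"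
    by (rule coef)
  also have "\<dots> = (\<Sum>l'\<in>UNIV. wt l' * (\<Sum>p<d l'. \<Sum>q<d l'. (if l' = l \<and> p = i then Rb l y k q else 0) * Rb l' (st x) q p))"
    using lki by (intro sum.cong refl arg_cong2[where f="(*)"]) (simp add: mul_U_left)
  also have "\<dots> = wt l * (\<Sum>q<d l. Rb l y k q * Rb l (st x) q i)"
    using lki by (simp add: if_conj0 sum_if_const)
  finally have "sprod M (U l i k) (bvec y) x \<noteq> 0" using lki wt_nz by simp
  then show "left_step M x y" unfolding left_step_def by blast
qed

lemma right_iff:
  "right_step M x y \<longleftrightarrow> (\<exists>l k j. k < d l \<and> j < d l \<and> (\<Sum>i<d l. Rb l y i k * Rb l (st x) j i) \<noteq> 0)"
proof
  assume "right_step M x y"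
  then obtain h where h: "sprod M (bvec y) h x \<noteq> 0" unfolding right_step_def by blast
  show "\<exists>l k j. k < d l \<and> j < d l \<and> (\<Sum>i<d l. Rb l y i k * Rb l (st x) j i) \<noteq> 0"
  proof (rule ccontr)
    assume C: "\<not> ?thesis"
    have "sprod M (bvec y) h x = (\<Sum>l\<in>UNIV. wt l * (\<Sum>i<d l. \<Sum>j<d l. repv (Rb l) (sprod M (bvec y) h) i j * Rb l (st x) j i))"
      by (rule coef)
    also have "\<dots> = (\<Sum>l\<in>UNIV. wt l * (\<Sum>i<d l. \<Sum>j<d l. (\<Sum>k<d l. Rb l y i k * repv (Rb l) h k j) * Rb l (st x) j i))"
      by (intro sum.cong refl arg_cong2[where f="(*)"]) (simp add: mult)
    also have "\<dots> = (\<Sum>l\<in>UNIV. wt l * (\<Sum>k<d l. \<Sum>j<d l. repv (Rb l) h k j * (\<Sum>i<d l. Rb l y i k * Rb l (st x) j i)))"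
      by (simp only: sum_rearr_right)
    also have "\<dots> = 0" using C by (auto intro!: sum.neutral)
    finally show False using h by simp
  qed
next
  assume "\<exists>l k j. k < d l \<and> j < d l \<and> (\<Sum>i<d l. Rb l y i k * Rb l (st x) j i) \<noteq> 0"
  then obtain l k j where lkj: "k < d l" "j < d l" "(\<Sum>i<d l. Rb l y i k * Rb l (st x) j i) \<noteq> 0" by blast
  have "sprod M (bvec y) (U l k j) x = (\<Sum>l'\<in>UNIV. wt l' * (\<Sum>p<d l'. \<Sum>q<d l'. repv (Rb l') (sprod M (bvec y) (U l k j)) p q * Rb l' (st x) q p))"
    by (rule coef)
  also have "\<dots> = (\<Sum>l'\<in>UNIV. wt l' * (\<Sum>p<d l'. \<Sum>q<d l'. (if l' = l \<and> q = j then Rb l y p k else 0) * Rb l' (st x) q p))"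
    using lkj by (intro sum.cong refl arg_cong2[where f="(*)"]) (simp add: mul_U_right)
  also have "\<dots> = wt l * (\<Sum>p<d l. Rb l y p k * Rb l (st x) j p)"
    using lkj by (simp add: if_conj0 sum_if_const)
  finally have "sprod M (bvec y) (U l k j) x \<noteq> 0" using lkj wt_nz by simp
  then show "right_step M x y" unfolding right_step_def by blast
qed

lemma lr_iff:
  "lr_step M x y \<longleftrightarrow> (\<exists>l r k j i. r < d l \<and> k < d l \<and> j < d l \<and> i < d l \<and> Rb l y r k \<noteq> 0 \<and> Rb l (st x) j i \<noteq> 0)"
proof
  assume "lr_step M x y"
  then obtain h h' where h: "sprod M (sprod M h (bvec y)) h' x \<noteq> 0" unfolding lr_step_def by blast
  show "\<exists>l r k j i. r < d l \<and> k < d l \<and> j < d l \<and> i < d l \<and> Rb l y r k \<noteq> 0 \<and> Rb l (st x) j i \<noteq> 0"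
  proof (rule ccontr)
    assume C: "\<not> ?thesis"
    have "sprod M (sprod M h (bvec y)) h' x = (\<Sum>l\<in>UNIV. wt l * (\<Sum>i<d l. \<Sum>j<d l. repv (Rb l) (sprod M (sprod M h (bvec y)) h') i j * Rb l (st x) j i))"
      by (rule coef)
    also have "\<dots> = (\<Sum>l\<in>UNIV. wt l * (\<Sum>i<d l. \<Sum>j<d l. (\<Sum>k<d l. (\<Sum>r<d l. repv (Rb l) h i r * Rb l y r k) * repv (Rb l) h' k j) * Rb l (st x) j i))"
      by (intro sum.cong refl arg_cong2[where f="(*)"]) (simp add: mult)
    also have "\<dots> = 0"
    proof (intro sum.neutral ballI)
      fix l :: 'l
      show "wt l * (\<Sum>i<d l. \<Sum>j<d l. (\<Sum>k<d l. (\<Sum>r<d l. repv (Rb l) h i r * Rb l y r k) * repv (Rb l) h' k j) * Rb l (st x) j i) = 0"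
      proof (cases "\<forall>r<d l. \<forall>k<d l. Rb l y r k = 0")
        case True then show ?thesis by simp
      next
        case False
        then have "\<forall>j<d l. \<forall>i<d l. Rb l (st x) j i = 0" using C by blast
        then show ?thesis by simp
      qed
    qed
    finally show False using h by simp
  qed
next
  assume "\<exists>l r k j i. r < d l \<and> k < d l \<and> j < d l \<and> i < d l \<and> Rb l y r k \<noteq> 0 \<and> Rb l (st x) j i \<noteq> 0"
  then obtain l r k j i where A: "r < d l" "k < d l" "j < d l" "i < d l" "Rb l y r k \<noteq> 0" "Rb l (st x) j i \<noteq> 0" by blast
  have "sprod M (sprod M (U l i r) (bvec y)) (U l k j) x = (\<Sum>l'\<in>UNIV. wt l' * (\<Sum>p<d l'. \<Sum>q<d l'. repv (Rb l') (sprod M (sprod M (U l i r) (bvec y)) (U l k j)) p q * Rb l' (st x) q p))"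
    by (rule coef)
  also have "\<dots> = (\<Sum>l'\<in>UNIV. wt l' * (\<Sum>p<d l'. \<Sum>q<d l'. (if l' = l \<and> q = j then (if p = i then Rb l y r k else 0) else 0) * Rb l' (st x) q p))"
    using A by (intro sum.cong refl arg_cong2[where f="(*)"]) (auto simp: mul_U_right mul_U_left)
  also have "\<dots> = wt l * (Rb l y r k * Rb l (st x) j i)"
    using A by (simp add: if_conj0 sum_if_const)
  finally have "sprod M (sprod M (U l i r) (bvec y)) (U l k j) x \<noteq> 0" using A wt_nz by simp
  then show "lr_step M x y" unfolding lr_step_def by blast
qed

end

lemma double_cancel: "(x::'g::linordered_ab_group_add) + x = y + y \<Longrightarrow> x = y"
proof (rule ccontr)
  assume A: "x + x = y + y" "x \<noteq> y"
  then consider "x < y" | "y < x" by (meson linorder_neqE)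
  then show False
  proof cases
    case 1 then have "x + x < y + y" by (simp add: add_strict_mono)
    then show False using A by simp
  next
    case 2 then have "y + y < x + x" by (simp add: add_strict_mono)
    then show False using A by simp
  qed
qed

locale valres =
  fixes \<nu> :: "'k::field \<Rightarrow> 'g::linordered_ab_group_add"
    and \<pi> :: "'k \<Rightarrow> 'f::field"
  assumes val: "valuation \<nu>"
    and res: "residue_map \<nu> \<pi>"
    and freal: "formally_real TYPE('f)"
begin

abbreviation VR where "VR \<equiv> val_ring \<nu>"

lemma vmult: "x \<noteq> 0 \<Longrightarrow> y \<noteq> 0 \<Longrightarrow> \<nu> (x * y) = \<nu> x + \<nu> y"
  using val unfolding valuation_def by blast

lemma vadd: "x \<noteq> 0 \<Longrightarrow> y \<noteq> 0 \<Longrightarrow> x + y \<noteq> 0 \<Longrightarrow> min (\<nu> x) (\<nu> y) \<le> \<nu> (x + y)"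
  using val unfolding valuation_def by blast

lemma vone: "\<nu> 1 = 0"
  using vmult[of 1 1] by simp

lemma vminus_one: "\<nu> (-1) = 0"
proof -
  have "\<nu> (-1) + \<nu> (-1) = 0 + 0" using vmult[of "-1" "-1"] vone by simp
  then show ?thesis by (rule double_cancel)
qed

lemma vuminus: "x \<noteq> 0 \<Longrightarrow> \<nu> (- x) = \<nu> x"
  using vmult[of "-1" x] vminus_one by simp

lemma vinverse: "x \<noteq> 0 \<Longrightarrow> \<nu> (inverse x) = - \<nu> x"
  using vmult[of x "inverse x"] vone by (simp add: eq_neg_iff_add_eq_0 add.commute)

lemma VR_iff: "x \<in> VR \<longleftrightarrow> x = 0 \<or> 0 \<le> \<nu> x"
  unfolding val_ring_def by simp

lemma O_zero[simp]: "0 \<in> VR" by (simp add: VR_iff)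
lemma O_one[simp]: "1 \<in> VR" by (simp add: VR_iff vone)

lemma O_mult[intro]: "x \<in> VR \<Longrightarrow> y \<in> VR \<Longrightarrow> x * y \<in> VR"
  by (cases "x = 0"; cases "y = 0") (auto simp: VR_iff vmult)

lemma O_add[intro]: "x \<in> VR \<Longrightarrow> y \<in> VR \<Longrightarrow> x + y \<in> VR"
proof -
  assume A: "x \<in> VR" "y \<in> VR"
  show ?thesis
  proof (cases "x = 0 \<or> y = 0 \<or> x + y = 0")
    case True then show ?thesis using A by auto
  next
    case False
    then have "min (\<nu> x) (\<nu> y) \<le> \<nu> (x + y)" using vadd by blast
    moreover have "0 \<le> \<nu> x" "0 \<le> \<nu> y" using A False by (auto simp: VR_iff)
    ultimately show ?thesis by (simp add: VR_iff) (metis min.bounded_iff order_trans)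
  qed
qed

lemma O_uminus[intro]: "x \<in> VR \<Longrightarrow> - x \<in> VR"
  by (cases "x = 0") (auto simp: VR_iff vuminus)

lemma O_sum[intro]: "(\<And>i. i \<in> A \<Longrightarrow> g i \<in> VR) \<Longrightarrow> sum g A \<in> VR"
  by (induction A rule: infinite_finite_induct) auto

lemma pi_add: "x \<in> VR \<Longrightarrow> y \<in> VR \<Longrightarrow> \<pi> (x + y) = \<pi> x + \<pi> y"
  using res unfolding residue_map_def by blast
lemma pi_mult: "x \<in> VR \<Longrightarrow> y \<in> VR \<Longrightarrow> \<pi> (x * y) = \<pi> x * \<pi> y"
  using res unfolding residue_map_def by blast
lemma pi_one[simp]: "\<pi> 1 = 1"
  using res unfolding residue_map_def by blast
lemma pi_zero[simp]: "\<pi> 0 = 0"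
proof -
  have "\<pi> 0 = \<pi> 0 + \<pi> 0" using pi_add[of 0 0] by simp
  then show ?thesis by (metis add_left_cancel add.right_neutral)
qed
lemma pi_ker: "x \<in> VR \<Longrightarrow> \<pi> x = 0 \<longleftrightarrow> x \<in> max_ideal \<nu>"
  using res unfolding residue_map_def by blast

lemma pi_sum: "(\<And>i. i \<in> A \<Longrightarrow> g i \<in> VR) \<Longrightarrow> \<pi> (sum g A) = (\<Sum>i\<in>A. \<pi> (g i))"
proof (induction A rule: infinite_finite_induct)
  case (insert x F)
  then show ?case by (simp add: pi_add O_sum)
qed auto

lemma pi_sum2: "(\<And>i j. i \<in> I \<Longrightarrow> j \<in> J i \<Longrightarrow> g i j \<in> VR) \<Longrightarrow> \<pi> (\<Sum>i\<in>I. \<Sum>j\<in>J i. g i j) = (\<Sum>i\<in>I. \<Sum>j\<in>J i. \<pi> (g i j))"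
  by (simp add: pi_sum O_sum)

lemma pi_sum3: "(\<And>i j k. i \<in> I \<Longrightarrow> j \<in> J i \<Longrightarrow> k \<in> K i j \<Longrightarrow> g i j k \<in> VR) \<Longrightarrow>
   \<pi> (\<Sum>i\<in>I. \<Sum>j\<in>J i. \<Sum>k\<in>K i j. g i j k) = (\<Sum>i\<in>I. \<Sum>j\<in>J i. \<Sum>k\<in>K i j. \<pi> (g i j k))"
  by (simp add: pi_sum O_sum)

lemma pi_nz: "x \<noteq> 0 \<Longrightarrow> \<nu> x = 0 \<Longrightarrow> \<pi> x \<noteq> 0"
  using pi_ker[of x] by (auto simp: VR_iff max_ideal_def)

lemma pi_inverse: "x \<noteq> 0 \<Longrightarrow> \<nu> x = 0 \<Longrightarrow> \<pi> (inverse x) = inverse (\<pi> x)"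
proof -
  assume A: "x \<noteq> 0" "\<nu> x = 0"
  have "inverse x \<in> VR" using A vinverse[of x] by (simp add: VR_iff)
  moreover have "x \<in> VR" using A by (simp add: VR_iff)
  ultimately have "\<pi> x * \<pi> (inverse x) = 1" using pi_mult[of x "inverse x"] A by simp
  then show ?thesis by (metis inverse_unique)
qed

lemma O_of_nat[simp]: "of_nat n \<in> VR"
  by (induction n) auto

lemma pi_of_nat: "\<pi> (of_nat n) = of_nat n"
  by (induction n) (auto simp: pi_add)

lemma F_of_nat_nz: "0 < n \<Longrightarrow> (of_nat n :: 'f) \<noteq> 0"
proof
  assume A: "0 < n" "(of_nat n :: 'f) = 0"
  have "sum_list (map (\<lambda>x. x * x) (replicate (n - 1) (1::'f))) = of_nat (n - 1)"
    by (induction "n - 1" arbitrary: n) (auto simp: sum_list_replicate)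
  also have "\<dots> = of_nat n - 1" using A(1) by (simp add: of_nat_diff)
  also have "\<dots> = -1" using A(2) by simp
  finally show False using freal unfolding formally_real_def by blast
qed

lemma K_of_nat: "0 < n \<Longrightarrow> (of_nat n :: 'k) \<noteq> 0 \<and> \<nu> (of_nat n) = 0"
proof -
  assume n: "0 < n"
  have pn: "\<pi> (of_nat n) \<noteq> 0" using F_of_nat_nz[OF n] by (simp add: pi_of_nat)
  then have nz: "(of_nat n :: 'k) \<noteq> 0" by auto
  have "of_nat n \<notin> max_ideal \<nu>" using pi_ker[of "of_nat n"] pn by simp
  moreover have "0 \<le> \<nu> (of_nat n)" using O_of_nat[of n] nz by (simp add: VR_iff)
  ultimately show ?thesis using nz by (auto simp: max_ideal_def)
qed

end


lemma sprod_bvec_bvec[simp]: "sprod m (bvec b) (bvec c) e = m b c e"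
  unfolding sprod_def bvec_def by simp

lemma sum_st_reindex:
  assumes inv: "\<And>b. st (st b) = b"
  shows "(\<Sum>b\<in>UNIV. g (st b)) = (\<Sum>b\<in>(UNIV::'b::finite set). (g b :: 'a::comm_monoid_add))"
proof -
  have i: "inj st" by (metis inv injI)
  have "st ` UNIV = UNIV" by (metis inv surj_def)
  then show ?thesis using sum.reindex[OF i, of g] by simp
qed

locale tsetup = valres \<nu> \<pi> for \<nu> :: "'k::field \<Rightarrow> 'g::linordered_ab_group_add" and \<pi> :: "'k \<Rightarrow> 'f::field" +
  fixes m :: "'b::finite \<Rightarrow> 'b \<Rightarrow> 'b \<Rightarrow> 'k"
    and st :: "'b \<Rightarrow> 'b"
    and tau :: "'b \<Rightarrow> 'k"
    and d :: "'l::finite \<Rightarrow> nat"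
    and rho :: "'l \<Rightarrow> 'b \<Rightarrow> nat \<Rightarrow> nat \<Rightarrow> 'k"
    and c :: "'l \<Rightarrow> 'k"
    and a :: "'l \<Rightarrow> 'g"
    and vp :: "'g \<Rightarrow> 'k"
  assumes alg: "is_assoc_unital m"
    and st_inv: "\<And>b. st (st b) = b"
    and st_anti: "\<And>b b' e. m b b' e = m (st b') (st b) (st e)"
    and B_dual: "\<And>b b'. tauH tau (sprod m (bvec b) (bvec (st b'))) = (if b = b' then 1 else 0)"
    and reps: "\<And>l. is_rep m (d l) (rho l)"
    and wed: "wedderburn d rho"
    and schur_nz: "\<And>l. c l \<noteq> 0"
    and schur: "\<And>b. tau b = (\<Sum>l\<in>UNIV. inverse (c l) * (\<Sum>i<d l. rho l b i i))"
    and a_def: "\<And>l. a l + a l = - \<nu> (c l)"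
    and vp_hom: "\<And>x y. x \<in> gen_subgroup (range a) \<Longrightarrow> y \<in> gen_subgroup (range a) \<Longrightarrow>
                   vp (x + y) = vp x * vp y"
    and vp_val: "\<And>x. x \<in> gen_subgroup (range a) \<Longrightarrow> vp x \<noteq> 0 \<and> \<nu> (vp x) = x"
    and balanced: "\<And>l S s i j. star_sym_basis m tau st S \<Longrightarrow> s \<in> S \<Longrightarrow> i < d l \<Longrightarrow> j < d l \<Longrightarrow>
                   repv (rho l) s i j = 0 \<or> - a l \<le> \<nu> (repv (rho l) s i j)"
begin

abbreviation mul where "mul \<equiv> sprod m"
abbreviation R where "R l \<equiv> repv (rho l)"
abbreviation tH where "tH \<equiv> tauH tau"
abbreviation stH where "stH \<equiv> starH st"

lemma H_rep: "i < d l \<Longrightarrow> j < d l \<Longrightarrow> R l (mul u v) i j = (\<Sum>k<d l. R l u i k * R l v k j)"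
  using reps[of l] unfolding is_rep_def by blast

lemma d_pos: "0 < d l"
  using wed unfolding wedderburn_def by blast

lemma tau_trace: "tH h = (\<Sum>l\<in>UNIV. inverse (c l) * (\<Sum>i<d l. R l h i i))"
proof -
  have "tH h = (\<Sum>b\<in>UNIV. \<Sum>l\<in>UNIV. \<Sum>i<d l. inverse (c l) * (h b * rho l b i i))"
    unfolding tauH_def schur by (simp add: sum_distrib_left mult_ac)
  also have "\<dots> = (\<Sum>l\<in>UNIV. \<Sum>i<d l. \<Sum>b\<in>UNIV. inverse (c l) * (h b * rho l b i i))"
    by (subst sum.swap) (rule sum.cong[OF refl], rule sum.swap)
  also have "\<dots> = (\<Sum>l\<in>UNIV. inverse (c l) * (\<Sum>i<d l. R l h i i))"
    unfolding repv_def by (simp add: sum_distrib_left)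
  finally show ?thesis .
qed

lemma tau_bilin: "tH (mul u v) = (\<Sum>b\<in>UNIV. \<Sum>b'\<in>UNIV. u b * v b' * tH (mul (bvec b) (bvec b')))"
proof -
  have "tH (mul u v) = (\<Sum>e\<in>UNIV. \<Sum>b\<in>UNIV. \<Sum>b'\<in>UNIV. u b * v b' * (m b b' e * tau e))"
    unfolding tauH_def sprod_def by (simp add: sum_distrib_right sum_distrib_left mult_ac)
  also have "\<dots> = (\<Sum>b\<in>UNIV. \<Sum>b'\<in>UNIV. \<Sum>e\<in>UNIV. u b * v b' * (m b b' e * tau e))"
    by (subst sum.swap) (rule sum.cong[OF refl], rule sum.swap)
  also have "\<dots> = (\<Sum>b\<in>UNIV. \<Sum>b'\<in>UNIV. u b * v b' * tH (mul (bvec b) (bvec b')))"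
    unfolding tauH_def by (simp add: sum_distrib_left)
  finally show ?thesis .
qed

lemma coefH: "tH (mul u (bvec (st x))) = u x"
proof -
  have "tH (mul u (bvec (st x))) = (\<Sum>b\<in>UNIV. \<Sum>b'\<in>UNIV. u b * bvec (st x) b' * tH (mul (bvec b) (bvec b')))"
    by (rule tau_bilin)
  also have "\<dots> = (\<Sum>b\<in>UNIV. u b * tH (mul (bvec b) (bvec (st x))))"
    by (simp add: bvec_def)
  also have "\<dots> = u x" by (simp add: B_dual)
  finally show ?thesis .
qed

lemma coefH2: "u x = (\<Sum>l\<in>UNIV. inverse (c l) * (\<Sum>i<d l. \<Sum>j<d l. R l u i j * rho l (st x) j i))"
proof -
  have "u x = tH (mul u (bvec (st x)))" by (simp add: coefH)
  also have "\<dots> = (\<Sum>l\<in>UNIV. inverse (c l) * (\<Sum>i<d l. \<Sum>j<d l. R l u i j * rho l (st x) j i))"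
    unfolding tau_trace by (intro sum.cong refl arg_cong2[where f="(*)"]) (simp add: H_rep)
  finally show ?thesis .
qed

lemma wed_ex1: "\<exists>!h. \<forall>l i j. i < d l \<longrightarrow> j < d l \<longrightarrow> R l h i j = M l i j"
  using wed unfolding wedderburn_def by (elim conjE) (erule allE)

lemma R_inj: "(\<And>l i j. i < d l \<Longrightarrow> j < d l \<Longrightarrow> R l h i j = R l h' i j) \<Longrightarrow> h = h'"
proof -
  assume A: "\<And>l i j. i < d l \<Longrightarrow> j < d l \<Longrightarrow> R l h i j = R l h' i j"
  define P where "P g \<longleftrightarrow> (\<forall>l i j. i < d l \<longrightarrow> j < d l \<longrightarrow> R l g i j = R l h i j)" for g
  have ex: "\<exists>!g. P g" unfolding P_def by (rule wed_ex1)
  have ph: "P h" unfolding P_def by simp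
  have ph': "P h'" unfolding P_def using A by simp
  from ex show ?thesis
  proof (rule ex1E)
    fix g assume "P g" and u: "\<forall>y. P y \<longrightarrow> y = g"
    then have "h = g" "h' = g" using ph ph' by auto
    then show ?thesis by simp
  qed
qed

definition Eu :: "'l \<Rightarrow> nat \<Rightarrow> nat \<Rightarrow> 'b \<Rightarrow> 'k" where
  "Eu l i j = (THE h. \<forall>l' p q. p < d l' \<longrightarrow> q < d l' \<longrightarrow> R l' h p q = (if l' = l \<and> p = i \<and> q = j then 1 else 0))"

lemma R_Eu: "p < d l' \<Longrightarrow> q < d l' \<Longrightarrow> R l' (Eu l i j) p q = (if l' = l \<and> p = i \<and> q = j then 1 else 0)"
proof -
  assume pq: "p < d l'" "q < d l'"
  have "\<exists>!h. \<forall>l' p q. p < d l' \<longrightarrow> q < d l' \<longrightarrow> R l' h p q = (\<lambda>l' p q. if l' = l \<and> p = i \<and> q = j then 1 else 0) l' p q"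
    by (rule wed_ex1)
  then have "\<forall>l' p q. p < d l' \<longrightarrow> q < d l' \<longrightarrow> R l' (Eu l i j) p q = (if l' = l \<and> p = i \<and> q = j then 1 else 0)"
    unfolding Eu_def by (rule theI') 
  then show ?thesis using pq by blast
qed

sublocale H: mrep m d rho Eu "\<lambda>l. inverse (c l)" st
proof
  fix i j l u v assume "i < d l" "j < d l"
  then show "R l (mul u v) i j = (\<Sum>k<d l. R l u i k * R l v k j)" by (rule H_rep)
next
  fix i j l p q l' assume "i < d l" "j < d l" "p < d l'" "q < d l'"
  then show "R l' (Eu l i j) p q = (if l' = l \<and> p = i \<and> q = j then 1 else 0)" by (simp add: R_Eu)
next
  fix u :: "'b \<Rightarrow> 'k" and x
  show "u x = (\<Sum>l\<in>UNIV. inverse (c l) * (\<Sum>i<d l. \<Sum>j<d l. R l u i j * rho l (st x) j i))" by (rule coefH2)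
next
  fix l show "inverse (c l) \<noteq> 0" by (simp add: schur_nz)
qed


lemma stH_apply: "stH u b = u (st b)" by (simp add: starH_def)
lemma stH_stH[simp]: "stH (stH u) = u" by (simp add: starH_def st_inv)
lemma stH_bvec: "stH (bvec b) = bvec (st b)"
  unfolding starH_def bvec_def by (metis st_inv)
lemma stH_zero[simp]: "stH (\<lambda>b. 0) = (\<lambda>b. 0)" by (simp add: starH_def)
lemma stH_sum: "stH (\<lambda>b. \<Sum>x\<in>I. F x b) = (\<lambda>b. \<Sum>x\<in>I. stH (F x) b)" by (simp add: starH_def)

lemma stH_mul: "stH (mul u v) = mul (stH v) (stH u)"
proof
  fix e
  have "mul (stH v) (stH u) e = (\<Sum>b\<in>UNIV. \<Sum>b'\<in>UNIV. v (st b) * u (st b') * m b b' e)"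
    unfolding sprod_def starH_def by simp
  also have "\<dots> = (\<Sum>b\<in>UNIV. \<Sum>b'\<in>UNIV. v b * u (st b') * m (st b) b' e)"
    using sum_st_reindex[OF st_inv, of "\<lambda>b. \<Sum>b'\<in>UNIV. v b * u (st b') * m (st b) b' e"] by (simp add: st_inv)
  also have "\<dots> = (\<Sum>b\<in>UNIV. \<Sum>b'\<in>UNIV. v b * u b' * m (st b) (st b') e)"
  proof (rule sum.cong[OF refl])
    fix b
    show "(\<Sum>b'\<in>UNIV. v b * u (st b') * m (st b) b' e) = (\<Sum>b'\<in>UNIV. v b * u b' * m (st b) (st b') e)"
      using sum_st_reindex[OF st_inv, of "\<lambda>b'. v b * u b' * m (st b) (st b') e"] by (simp add: st_inv)
  qed
  also have "\<dots> = (\<Sum>b\<in>UNIV. \<Sum>b'\<in>UNIV. u b' * v b * m b' b (st e))"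
    by (intro sum.cong refl) (simp add: st_anti[of _ _ "st e"] st_inv mult_ac)
  also have "\<dots> = mul u v (st e)"
    unfolding sprod_def by (rule sum.swap)
  finally show "stH (mul u v) e = mul (stH v) (stH u) e" by (simp add: starH_def)
qed

lemma R_sum: "R l (\<lambda>b. \<Sum>x\<in>I. F x b) p q = (\<Sum>x\<in>I. R l (F x) p q)"
  unfolding repv_def by (simp add: sum_distrib_right) (rule sum.swap)
lemma R_scale: "R l (\<lambda>b. k * F b) p q = k * R l F p q"
  unfolding repv_def by (simp add: sum_distrib_left mult_ac)
lemma R_zero[simp]: "R l (\<lambda>b. 0) p q = 0"
  unfolding repv_def by simp

definition e :: "'b \<Rightarrow> 'k" where "e = (SOME e. \<forall>u. mul e u = u \<and> mul u e = u)"

lemma e_unit: "mul e u = u" "mul u e = u"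
proof -
  have "\<exists>e. \<forall>u. mul e u = u \<and> mul u e = u" using alg unfolding is_assoc_unital_def by blast
  then have "\<forall>u. mul e u = u \<and> mul u e = u" unfolding e_def by (rule someI_ex)
  then show "mul e u = u" "mul u e = u" by auto
qed

lemma stH_e: "stH e = e"
proof -
  have l: "mul (stH e) u = u" for u
  proof -
    have "mul (stH e) u = mul (stH e) (stH (stH u))" by simp
    also have "\<dots> = stH (mul (stH u) e)" by (simp add: stH_mul)
    also have "\<dots> = u" by (simp add: e_unit)
    finally show ?thesis .
  qed
  have "stH e = mul (stH e) e" by (simp add: e_unit)
  also have "\<dots> = e" by (rule l)
  finally show ?thesis .
qed

lemma R_e: "p < d l \<Longrightarrow> k < d l \<Longrightarrow> R l e p k = (if p = k then 1 else 0)"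
proof -
  assume A: "p < d l" "k < d l"
  have "R l (mul e (Eu l k k)) p k = R l e p k" using A by (simp add: H.mul_U_right)
  then show ?thesis using A by (simp add: e_unit R_Eu)
qed

definition zc :: "'l \<Rightarrow> 'b \<Rightarrow> 'k" where "zc l = (\<lambda>b. \<Sum>i<d l. Eu l i i b)"

lemma R_z: "p < d l' \<Longrightarrow> q < d l' \<Longrightarrow> R l' (zc l) p q = (if l' = l \<and> p = q then 1 else 0)"
  unfolding zc_def R_sum by (auto simp: R_Eu if_conj0)

lemma mul_z: "p < d l' \<Longrightarrow> q < d l' \<Longrightarrow> R l' (mul (zc l) h) p q = (if l' = l then R l' h p q else 0)"
  by (auto simp: H_rep R_z if_conj0)

lemma mul_z': "p < d l' \<Longrightarrow> q < d l' \<Longrightarrow> R l' (mul h (zc l)) p q = (if l' = l then R l' h p q else 0)"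
  by (auto simp: H_rep R_z if_conj0 eq_commute[of _ q])

lemma z_central: "mul (zc l) h = mul h (zc l)"
  by (rule R_inj) (simp add: mul_z mul_z')

lemma z_orth: "l \<noteq> l' \<Longrightarrow> mul (zc l) (zc l') = (\<lambda>b. 0)"
  by (rule R_inj) (auto simp: mul_z R_z)

lemma z_sum: "(\<lambda>b. \<Sum>l\<in>UNIV. zc l b) = e"
  by (rule R_inj) (simp add: R_sum R_z R_e if_conj0)

lemma stz_central: "mul (stH (zc l)) h = mul h (stH (zc l))"
proof -
  have "mul (stH (zc l)) h = mul (stH (zc l)) (stH (stH h))" by simp
  also have "\<dots> = stH (mul (stH h) (zc l))" by (simp add: stH_mul)
  also have "\<dots> = stH (mul (zc l) (stH h))" by (simp add: z_central)
  also have "\<dots> = mul h (stH (zc l))" by (simp add: stH_mul)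
  finally show ?thesis .
qed

definition lam :: "'l \<Rightarrow> 'l \<Rightarrow> 'k" where "lam l l' = R l (stH (zc l')) 0 0"

lemma R_stz: "p < d l \<Longrightarrow> q < d l \<Longrightarrow> R l (stH (zc l')) p q = (if p = q then lam l l' else 0)"
proof -
  assume A: "p < d l" "q < d l"
  have d0: "0 < d l" by (rule d_pos)
  have "R l (mul (stH (zc l')) (Eu l q 0)) p 0 = R l (mul (Eu l q 0) (stH (zc l'))) p 0"
    by (simp add: stz_central)
  then have "R l (stH (zc l')) p q = (if p = q then R l (stH (zc l')) 0 0 else 0)"
    using A d0 by (simp add: H.mul_U_right H.mul_U_left)
  then show ?thesis by (simp add: lam_def)
qed

lemma lam_sum: "(\<Sum>l'\<in>UNIV. lam l l') = 1"
proof -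
  have "R l (stH e) 0 0 = 1" using d_pos[of l] by (simp add: stH_e R_e)
  moreover have "R l (stH e) 0 0 = (\<Sum>l'\<in>UNIV. lam l l')"
    unfolding z_sum[symmetric] stH_sum R_sum lam_def by simp
  ultimately show ?thesis by simp
qed

lemma lam_orth: "l' \<noteq> l'' \<Longrightarrow> lam l l' * lam l l'' = 0"
proof -
  assume ne: "l' \<noteq> l''"
  have d0: "0 < d l" by (rule d_pos)
  have "mul (stH (zc l')) (stH (zc l'')) = stH (mul (zc l'') (zc l'))" by (simp add: stH_mul)
  also have "\<dots> = (\<lambda>b. 0)" using ne by (simp add: z_orth)
  finally have "R l (mul (stH (zc l')) (stH (zc l''))) 0 0 = 0" by simp
  then show ?thesis using d0 by (simp add: H_rep R_stz if_conj0)
qed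

definition sig :: "'l \<Rightarrow> 'l" where "sig l = (SOME l'. lam l l' \<noteq> 0)"

lemma sig_lam: "lam l (sig l) \<noteq> 0" "l' \<noteq> sig l \<Longrightarrow> lam l l' = 0"
proof -
  have "\<exists>l'. lam l l' \<noteq> 0"
  proof (rule ccontr)
    assume "\<not> ?thesis"
    then have "(\<Sum>l'\<in>UNIV. lam l l') = 0" by simp
    then show False using lam_sum by simp
  qed
  then show nz: "lam l (sig l) \<noteq> 0" unfolding sig_def by (rule someI_ex)
  show "l' \<noteq> sig l \<Longrightarrow> lam l l' = 0" using lam_orth[of l' "sig l" l] nz by simp
qed


definition chi :: "'l \<Rightarrow> ('b \<Rightarrow> 'k) \<Rightarrow> 'k" where "chi l h = (\<Sum>i<d l. R l h i i)"
definition phi :: "'l \<Rightarrow> ('b \<Rightarrow> 'k) \<Rightarrow> 'k" where "phi l h = chi l (stH h)"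

lemma chi_comm: "chi l (mul u v) = chi l (mul v u)"
proof -
  have "chi l (mul u v) = (\<Sum>i<d l. \<Sum>k<d l. R l u i k * R l v k i)"
    unfolding chi_def by (simp add: H_rep)
  also have "\<dots> = (\<Sum>k<d l. \<Sum>i<d l. R l v k i * R l u i k)"
    by (subst sum.swap) (simp add: mult.commute)
  also have "\<dots> = chi l (mul v u)"
    unfolding chi_def by (simp add: H_rep)
  finally show ?thesis .
qed

lemma phi_comm: "phi l (mul u v) = phi l (mul v u)"
  unfolding phi_def stH_mul by (rule chi_comm)

lemma chi_sum: "chi l (\<lambda>b. \<Sum>x\<in>I. F x b) = (\<Sum>x\<in>I. chi l (F x))"
  unfolding chi_def R_sum by (rule sum.swap)
lemma chi_scale: "chi l (\<lambda>b. k * F b) = k * chi l F"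
  unfolding chi_def R_scale by (simp add: sum_distrib_left)
lemma phi_sum: "phi l (\<lambda>b. \<Sum>x\<in>I. F x b) = (\<Sum>x\<in>I. phi l (F x))"
  unfolding phi_def stH_sum chi_sum ..
lemma phi_scale: "phi l (\<lambda>b. k * F b) = k * phi l F"
proof -
  have "stH (\<lambda>b. k * F b) = (\<lambda>b. k * stH F b)" by (simp add: starH_def)
  then show ?thesis unfolding phi_def by (simp add: chi_scale)
qed
lemma phi_zero[simp]: "phi l (\<lambda>b. 0) = 0"
  unfolding phi_def chi_def by simp

lemma decomp: "h = (\<lambda>b. \<Sum>l'\<in>UNIV. \<Sum>i<d l'. \<Sum>j<d l'. R l' h i j * Eu l' i j b)"
proof (rule R_inj)
  fix l p q assume pq: "p < d l" "q < d l"
  have "R l (\<lambda>b. \<Sum>l'\<in>UNIV. \<Sum>i<d l'. \<Sum>j<d l'. R l' h i j * Eu l' i j b) p q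
        = (\<Sum>l'\<in>UNIV. \<Sum>i<d l'. \<Sum>j<d l'. R l' h i j * R l (Eu l' i j) p q)"
    by (simp add: R_sum R_scale)
  also have "\<dots> = (\<Sum>l'\<in>UNIV. if l = l' then (\<Sum>i<d l'. \<Sum>j<d l'. R l' h i j * (if p = i \<and> q = j then 1 else 0)) else 0)"
    using pq by (intro sum.cong refl) (simp add: R_Eu if_conj0 sum_if_const eq_commute[of l])
  also have "\<dots> = R l h p q" using pq by (simp add: if_conj0 sum_if_const)
  finally show "R l h p q = R l (\<lambda>b. \<Sum>l'\<in>UNIV. \<Sum>i<d l'. \<Sum>j<d l'. R l' h i j * Eu l' i j b) p q" by simp
qed

lemma Eu_mul: "i < d l \<Longrightarrow> j < d l \<Longrightarrow> j' < d l \<Longrightarrow> k < d l \<Longrightarrow>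
   mul (Eu l i j) (Eu l j' k) = (if j = j' then Eu l i k else (\<lambda>b. 0))"
  by (rule R_inj) (auto simp: H.mul_U_left R_Eu)

lemma phi_Eu: "i < d l' \<Longrightarrow> j < d l' \<Longrightarrow> phi l (Eu l' i j) = (if i = j then phi l (Eu l' 0 0) else 0)"
proof -
  assume A: "i < d l'" "j < d l'"
  have d0: "0 < d l'" by (rule d_pos)
  have "phi l (Eu l' i j) = phi l (mul (Eu l' i 0) (Eu l' 0 j))" using A d0 by (simp add: Eu_mul)
  also have "\<dots> = phi l (mul (Eu l' 0 j) (Eu l' i 0))" by (rule phi_comm)
  also have "\<dots> = (if i = j then phi l (Eu l' 0 0) else 0)" using A d0 by (simp add: Eu_mul)
  finally show ?thesis .
qed

lemma phi_decomp: "phi l h = (\<Sum>l'\<in>UNIV. phi l (Eu l' 0 0) * chi l' h)"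
proof -
  have "phi l h = phi l (\<lambda>b. \<Sum>l'\<in>UNIV. \<Sum>i<d l'. \<Sum>j<d l'. R l' h i j * Eu l' i j b)"
    by (subst decomp[of h]) (rule refl)
  also have "\<dots> = (\<Sum>l'\<in>UNIV. \<Sum>i<d l'. \<Sum>j<d l'. R l' h i j * phi l (Eu l' i j))"
    by (simp add: phi_sum phi_scale)
  also have "\<dots> = (\<Sum>l'\<in>UNIV. \<Sum>i<d l'. \<Sum>j<d l'. R l' h i j * (if i = j then phi l (Eu l' 0 0) else 0))"
    by (intro sum.cong refl) (simp add: phi_Eu)
  also have "\<dots> = (\<Sum>l'\<in>UNIV. \<Sum>i<d l'. R l' h i i * phi l (Eu l' 0 0))"
    by simp
  also have "\<dots> = (\<Sum>l'\<in>UNIV. phi l (Eu l' 0 0) * chi l' h)"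
    by (simp add: chi_def sum_distrib_right mult.commute)
  finally show ?thesis .
qed

lemma Eu_z: "Eu l 0 0 = mul (zc l) (Eu l 0 0)"
  by (rule R_inj) (auto simp: mul_z R_Eu)

lemma phi_Eu_off: "l' \<noteq> sig l \<Longrightarrow> phi l (Eu l' 0 0) = 0"
proof -
  assume ne: "l' \<noteq> sig l"
  have "phi l (Eu l' 0 0) = chi l (mul (stH (Eu l' 0 0)) (stH (zc l')))"
    unfolding phi_def by (subst Eu_z) (simp add: stH_mul)
  also have "\<dots> = (\<Sum>i<d l. \<Sum>k<d l. R l (stH (Eu l' 0 0)) i k * (if k = i then lam l l' else 0))"
    unfolding chi_def by (intro sum.cong refl) (simp add: H_rep R_stz)
  also have "\<dots> = 0" using sig_lam(2)[OF ne] by simp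
  finally show ?thesis .
qed

definition sc :: "'l \<Rightarrow> 'k" where "sc l = phi l (Eu (sig l) 0 0)"

lemma phi_sig: "phi l h = sc l * chi (sig l) h"
proof -
  have "phi l h = (\<Sum>l'\<in>UNIV. phi l (Eu l' 0 0) * chi l' h)" by (rule phi_decomp)
  also have "\<dots> = (\<Sum>l'\<in>UNIV. if l' = sig l then sc l * chi (sig l) h else 0)"
    by (intro sum.cong refl) (auto simp: phi_Eu_off sc_def)
  also have "\<dots> = sc l * chi (sig l) h" by simp
  finally show ?thesis .
qed

lemma chi_Eu: "chi l' (Eu l 0 0) = (if l' = l then 1 else 0)"
  using d_pos[of l'] unfolding chi_def by (auto simp: R_Eu if_conj0)

lemma sig_inv: "sig (sig l) = l" and sc_inv: "sc l * sc (sig l) = 1"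
proof -
  have "chi l h = sc l * sc (sig l) * chi (sig (sig l)) h" for h
  proof -
    have "chi l h = phi l (stH h)" by (simp add: phi_def)
    also have "\<dots> = sc l * chi (sig l) (stH h)" by (rule phi_sig)
    also have "\<dots> = sc l * phi (sig l) h" by (simp add: phi_def)
    also have "\<dots> = sc l * sc (sig l) * chi (sig (sig l)) h" by (simp add: phi_sig)
    finally show ?thesis .
  qed
  from this[of "Eu l 0 0"] have "1 = sc l * sc (sig l) * (if sig (sig l) = l then 1 else 0)"
    by (simp add: chi_Eu)
  then show "sig (sig l) = l" "sc l * sc (sig l) = 1" by (auto split: if_splits)
qed

lemma chi_e: "chi l e = of_nat (d l)"
  unfolding chi_def by (simp add: R_e)

lemma d_rel: "of_nat (d l) = sc l * of_nat (d (sig l))"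
proof -
  have "of_nat (d l) = phi l e" by (simp add: phi_def stH_e chi_e)
  also have "\<dots> = sc l * of_nat (d (sig l))" by (simp add: phi_sig chi_e)
  finally show ?thesis .
qed

lemma tau_e: "tau b = e b"
proof -
  have "tau b = tH (bvec b)" unfolding tauH_def bvec_def by simp
  also have "\<dots> = tH (mul e (bvec (st (st b))))" by (simp add: e_unit st_inv)
  also have "\<dots> = e (st b)" by (rule coefH)
  also have "\<dots> = e b" using stH_e by (metis stH_apply)
  finally show ?thesis .
qed

lemma tau_st1: "tau (st b) = tau b"
  using stH_e by (metis stH_apply tau_e)

lemma tau_st: "tH (stH h) = tH h"
proof -
  have "tH (stH h) = (\<Sum>b\<in>UNIV. h (st b) * tau (st b))" unfolding tauH_def starH_def by (simp add: tau_st1)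
  also have "\<dots> = tH h" unfolding tauH_def by (rule sum_st_reindex[OF st_inv, of "\<lambda>b. h b * tau b"])
  finally show ?thesis .
qed

lemma c_rel: "c l = sc l * c (sig l)"
proof -
  have eq: "(\<Sum>l'\<in>UNIV. inverse (c l') * chi l' h) = (\<Sum>l'\<in>UNIV. inverse (c l') * (sc l' * chi (sig l') h))" for h
  proof -
    have "(\<Sum>l'\<in>UNIV. inverse (c l') * chi l' h) = tH h" by (simp add: tau_trace chi_def)
    also have "\<dots> = tH (stH h)" by (simp add: tau_st)
    also have "\<dots> = (\<Sum>l'\<in>UNIV. inverse (c l') * phi l' h)" by (simp add: tau_trace chi_def phi_def)
    finally show ?thesis by (simp add: phi_sig)
  qed
  have sig_eq: "sig l' = sig l \<longleftrightarrow> l' = l" for l' by (metis sig_inv)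
  from eq[of "Eu (sig l) 0 0"] have "inverse (c (sig l)) = inverse (c l) * sc l"
    by (simp add: chi_Eu sig_eq)
  then show ?thesis using schur_nz[of l] schur_nz[of "sig l"]
    by (simp add: field_simps)
qed


lemma sc_props: "sc l \<noteq> 0" "\<nu> (sc l) = 0" "sc l \<in> VR"
proof -
  have n1: "(of_nat (d l) :: 'k) \<noteq> 0" "\<nu> (of_nat (d l) :: 'k) = 0" using K_of_nat[OF d_pos] by auto
  have n2: "(of_nat (d (sig l)) :: 'k) \<noteq> 0" "\<nu> (of_nat (d (sig l)) :: 'k) = 0" using K_of_nat[OF d_pos] by auto
  show nz: "sc l \<noteq> 0" using d_rel[of l] n1 by auto
  have "\<nu> (of_nat (d l) :: 'k) = \<nu> (sc l) + \<nu> (of_nat (d (sig l)) :: 'k)"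
    using d_rel[of l] vmult[OF nz n2(1)] by simp
  then show v: "\<nu> (sc l) = 0" using n1 n2 by simp
  show "sc l \<in> VR" using v by (simp add: VR_iff)
qed

lemma a_in: "a l \<in> gen_subgroup (range a)"
  by (rule gen_base) simp

definition vpa :: "'l \<Rightarrow> 'k" where "vpa l = vp (a l)"
definition f :: "'l \<Rightarrow> 'k" where "f l = vp (a l + a l) * c l"

lemma vpa_props: "vpa l \<noteq> 0" "\<nu> (vpa l) = a l"
  using vp_val[OF a_in] unfolding vpa_def by auto

lemma f_vpa: "f l = vpa l * vpa l * c l"
  unfolding f_def vpa_def using vp_hom[OF a_in a_in] by simp

lemma f_props: "f l \<noteq> 0" "\<nu> (f l) = 0" "f l \<in> VR" "inverse (f l) \<in> VR"
proof -
  show nz: "f l \<noteq> 0" unfolding f_vpa using vpa_props schur_nz by simp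
  have "\<nu> (f l) = a l + a l + \<nu> (c l)"
    unfolding f_vpa using vpa_props schur_nz by (simp add: vmult)
  then show v: "\<nu> (f l) = 0" using a_def[of l] by simp
  show "f l \<in> VR" using v by (simp add: VR_iff)
  show "inverse (f l) \<in> VR" using v nz by (simp add: VR_iff vinverse)
qed

lemma pif_nz: "\<pi> (f l) \<noteq> 0" using f_props pi_nz by blast

lemma a_rel: "a (sig l) = a l"
proof -
  have "\<nu> (c l) = \<nu> (sc l) + \<nu> (c (sig l))" using c_rel[of l] sc_props schur_nz by (simp add: vmult)
  then have "\<nu> (c l) = \<nu> (c (sig l))" using sc_props by simp
  then have "a (sig l) + a (sig l) = a l + a l" using a_def[of l] a_def[of "sig l"] by simp
  then show ?thesis by (rule double_cancel)
qed

lemma vpa_rel: "vpa (sig l) = vpa l" unfolding vpa_def a_rel ..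

lemma f_rel: "f l = sc l * f (sig l)"
  unfolding f_vpa vpa_rel using c_rel[of l] by (simp add: mult_ac)

lemma bvec_inj: "bvec b = (bvec b' :: 'b \<Rightarrow> 'k) \<longleftrightarrow> b = b'"
proof
  assume "bvec b = (bvec b' :: 'b \<Rightarrow> 'k)"
  then have "bvec b b = (bvec b' b :: 'k)" by simp
  then show "b = b'" unfolding bvec_def by (auto split: if_splits)
qed simp

lemma std_basis: "star_sym_basis m tau st (range bvec)"
  unfolding star_sym_basis_def
proof (intro conjI)
  show "is_basis (range (bvec :: 'b \<Rightarrow> 'b \<Rightarrow> 'k))"
    unfolding is_basis_def
  proof (intro conjI allI)
    show "finite (range (bvec :: 'b \<Rightarrow> 'b \<Rightarrow> 'k))" by simp
    fix h :: "'b \<Rightarrow> 'k"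
    have ib: "inj (bvec :: 'b \<Rightarrow> 'b \<Rightarrow> 'k)" by (rule injI) (simp add: bvec_inj)
    define co where "co s = (if s \<in> range bvec then h (inv bvec s) else 0)" for s :: "'b \<Rightarrow> 'k"
    have co_b: "co (bvec b) = h b" for b unfolding co_def using ib by simp
    have expand: "(\<Sum>s\<in>range bvec. g s * s b) = g (bvec b)" for g :: "('b \<Rightarrow> 'k) \<Rightarrow> 'k" and b
    proof -
      have "(\<Sum>s\<in>range bvec. g s * s b) = (\<Sum>b'\<in>UNIV. g (bvec b') * bvec b' b)"
        by (subst sum.reindex[OF ib]) simp
      also have "\<dots> = g (bvec b)" by (simp add: bvec_def)
      finally show ?thesis .
    qed
    show "\<exists>!co. (\<forall>s. s \<notin> range bvec \<longrightarrow> co s = 0) \<and> (\<forall>b. h b = (\<Sum>s\<in>range bvec. co s * s b))"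
    proof (rule ex1I[of _ co])
      show "(\<forall>s. s \<notin> range bvec \<longrightarrow> co s = 0) \<and> (\<forall>b. h b = (\<Sum>s\<in>range bvec. co s * s b))"
        by (simp add: expand co_b) (simp add: co_def)
    next
      fix co' assume A: "(\<forall>s. s \<notin> range bvec \<longrightarrow> co' s = 0) \<and> (\<forall>b. h b = (\<Sum>s\<in>range bvec. co' s * s b))"
      show "co' = co"
      proof
        fix s show "co' s = co s"
        proof (cases "s \<in> range bvec")
          case True
          then obtain b where b: "s = bvec b" by blast
          have "h b = co' (bvec b)" using A expand by metis
          then show ?thesis using b co_b by simp
        next
          case False then show ?thesis using A by (simp add: co_def)
        qed
      qed
    qed
  qed
next
  have "starH st ` range bvec = range (\<lambda>b. bvec (st b) :: 'b \<Rightarrow> 'k)" by (simp add: image_image stH_bvec)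
  also have "\<dots> = bvec ` range st" by (simp add: image_image)
  also have "range st = UNIV" by (metis st_inv surjI)
  finally show "starH st ` range bvec = (range bvec :: ('b \<Rightarrow> 'k) set)" by simp
next
  show "\<forall>s\<in>range bvec. \<forall>t\<in>range bvec. tauH tau (sprod m s (starH st t)) = (if s = t then 1 else 0)"
    by (auto simp: stH_bvec B_dual bvec_inj)
qed

lemma rho_bal: "i < d l \<Longrightarrow> j < d l \<Longrightarrow> rho l b i j = 0 \<or> - a l \<le> \<nu> (rho l b i j)"
  using balanced[OF std_basis, of "bvec b" i l j] by simp

definition A :: "'l \<Rightarrow> 'b \<Rightarrow> nat \<Rightarrow> nat \<Rightarrow> 'k" where "A l b i j = vpa l * rho l b i j"

lemma A_in: "i < d l \<Longrightarrow> j < d l \<Longrightarrow> A l b i j \<in> VR"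
proof -
  assume ij: "i < d l" "j < d l"
  show ?thesis
  proof (cases "rho l b i j = 0")
    case True then show ?thesis by (simp add: A_def)
  next
    case False
    then have "- a l \<le> \<nu> (rho l b i j)" using rho_bal[OF ij, of b] by simp
    then have "a l + - a l \<le> a l + \<nu> (rho l b i j)" by (rule add_left_mono)
    then have "0 \<le> \<nu> (vpa l) + \<nu> (rho l b i j)" using vpa_props by simp
    then show ?thesis unfolding A_def using False vpa_props by (simp add: VR_iff vmult)
  qed
qed

lemma Eu_coef: "i < d l \<Longrightarrow> j < d l \<Longrightarrow> Eu l i j b = inverse (c l) * rho l (st b) j i"
proof -
  assume ij: "i < d l" "j < d l"
  have "Eu l i j b = (\<Sum>l'\<in>UNIV. inverse (c l') * (\<Sum>p<d l'. \<Sum>q<d l'. R l' (Eu l i j) p q * rho l' (st b) q p))"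
    by (rule coefH2)
  also have "\<dots> = (\<Sum>l'\<in>UNIV. if l' = l then inverse (c l) * rho l (st b) j i else 0)"
    using ij by (intro sum.cong refl) (auto simp: R_Eu if_conj0 sum_if_const)
  also have "\<dots> = inverse (c l) * rho l (st b) j i" by simp
  finally show ?thesis .
qed

lemma orthK: "i < d l \<Longrightarrow> j < d l \<Longrightarrow> k < d l' \<Longrightarrow> p < d l' \<Longrightarrow>
  (\<Sum>b\<in>UNIV. rho l' b k p * rho l (st b) j i) = (if l' = l \<and> k = i \<and> p = j then c l else 0)"
proof -
  assume A: "i < d l" "j < d l" "k < d l'" "p < d l'"
  have "R l' (Eu l i j) k p = (\<Sum>b\<in>UNIV. inverse (c l) * rho l (st b) j i * rho l' b k p)"
    unfolding repv_def using A by (simp add: Eu_coef)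
  also have "\<dots> = inverse (c l) * (\<Sum>b\<in>UNIV. rho l' b k p * rho l (st b) j i)"
    by (simp add: sum_distrib_left mult_ac)
  finally have "inverse (c l) * (\<Sum>b\<in>UNIV. rho l' b k p * rho l (st b) j i) = (if l' = l \<and> k = i \<and> p = j then 1 else 0)"
    using A by (simp add: R_Eu)
  then show ?thesis using schur_nz[of l] by (auto simp: field_simps split: if_splits)
qed

lemma compK: "(\<Sum>l\<in>UNIV. inverse (c l) * (\<Sum>i<d l. \<Sum>j<d l. rho l b i j * rho l (st w) j i)) = (if b = w then 1 else 0)"
proof -
  have "bvec b w = (\<Sum>l\<in>UNIV. inverse (c l) * (\<Sum>i<d l. \<Sum>j<d l. rho l b i j * rho l (st w) j i))"
    using coefH2[of "bvec b" w] by (simp only: repv_bvec)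
  then show ?thesis by (simp add: bvec_def eq_commute)
qed


definition C :: "'l \<Rightarrow> 'b \<Rightarrow> nat \<Rightarrow> nat \<Rightarrow> 'f" where "C l b i j = \<pi> (A l b i j)"

abbreviation MJ where "MJ \<equiv> multJ vp \<pi> a c d rho st"
abbreviation gJ where "gJ \<equiv> gammaJ vp \<pi> a c d rho"

lemma gam_eq: "gJ x y z = (\<Sum>l\<in>UNIV. inverse (\<pi> (f l)) * (\<Sum>s<d l. \<Sum>t<d l. \<Sum>u<d l. C l x s t * C l y t u * C l z u s))"
  unfolding gammaJ_def Let_def C_def A_def f_def vpa_def by (simp add: sum_distrib_left mult.assoc)

lemma orthJ: "i < d l \<Longrightarrow> j < d l \<Longrightarrow> k < d l' \<Longrightarrow> p < d l' \<Longrightarrow>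
  (\<Sum>b\<in>UNIV. C l' b k p * C l (st b) j i) = (if l' = l \<and> k = i \<and> p = j then \<pi> (f l) else 0)"
proof -
  assume X: "i < d l" "j < d l" "k < d l'" "p < d l'"
  have "(\<Sum>b\<in>UNIV. C l' b k p * C l (st b) j i) = (\<Sum>b\<in>UNIV. \<pi> (A l' b k p * A l (st b) j i))"
    unfolding C_def using X by (simp add: pi_mult A_in)
  also have "\<dots> = \<pi> (\<Sum>b\<in>UNIV. A l' b k p * A l (st b) j i)"
    using X by (simp add: pi_sum A_in O_mult)
  also have "(\<Sum>b\<in>UNIV. A l' b k p * A l (st b) j i) = vpa l' * vpa l * (\<Sum>b\<in>UNIV. rho l' b k p * rho l (st b) j i)"
    unfolding A_def by (simp add: sum_distrib_left mult_ac)
  also have "\<dots> = (if l' = l \<and> k = i \<and> p = j then f l else 0)"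
    using X by (simp add: orthK f_vpa)
  finally show ?thesis by simp
qed

lemma compJ: "(\<Sum>l\<in>UNIV. inverse (\<pi> (f l)) * (\<Sum>i<d l. \<Sum>j<d l. C l b i j * C l (st w) j i)) = (if b = w then 1 else 0)"
proof -
  have "(\<Sum>l\<in>UNIV. inverse (\<pi> (f l)) * (\<Sum>i<d l. \<Sum>j<d l. C l b i j * C l (st w) j i))
      = (\<Sum>l\<in>UNIV. \<pi> (inverse (f l) * (\<Sum>i<d l. \<Sum>j<d l. A l b i j * A l (st w) j i)))"
  proof (rule sum.cong[OF refl])
    fix l
    have "(\<Sum>i<d l. \<Sum>j<d l. C l b i j * C l (st w) j i) = \<pi> (\<Sum>i<d l. \<Sum>j<d l. A l b i j * A l (st w) j i)"
      unfolding C_def by (subst pi_sum2) (auto intro!: O_mult A_in sum.cong simp: pi_mult A_in)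
    moreover have "(\<Sum>i<d l. \<Sum>j<d l. A l b i j * A l (st w) j i) \<in> VR" by (auto intro!: O_sum O_mult A_in)
    ultimately show "inverse (\<pi> (f l)) * (\<Sum>i<d l. \<Sum>j<d l. C l b i j * C l (st w) j i) = \<pi> (inverse (f l) * (\<Sum>i<d l. \<Sum>j<d l. A l b i j * A l (st w) j i))"
      using f_props by (simp add: pi_mult pi_inverse)
  qed
  also have "\<dots> = \<pi> (\<Sum>l\<in>UNIV. inverse (f l) * (\<Sum>i<d l. \<Sum>j<d l. A l b i j * A l (st w) j i))"
    by (subst pi_sum) (auto intro!: O_sum O_mult A_in f_props)
  also have "(\<Sum>l\<in>UNIV. inverse (f l) * (\<Sum>i<d l. \<Sum>j<d l. A l b i j * A l (st w) j i))
           = (\<Sum>l\<in>UNIV. inverse (c l) * (\<Sum>i<d l. \<Sum>j<d l. rho l b i j * rho l (st w) j i))"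
  proof (rule sum.cong[OF refl])
    fix l
    have "(\<Sum>i<d l. \<Sum>j<d l. A l b i j * A l (st w) j i) = vpa l * vpa l * (\<Sum>i<d l. \<Sum>j<d l. rho l b i j * rho l (st w) j i)"
      unfolding A_def by (simp add: sum_distrib_left mult_ac)
    then show "inverse (f l) * (\<Sum>i<d l. \<Sum>j<d l. A l b i j * A l (st w) j i) = inverse (c l) * (\<Sum>i<d l. \<Sum>j<d l. rho l b i j * rho l (st w) j i)"
      using vpa_props schur_nz by (simp add: f_vpa field_simps)
  qed
  also have "\<dots> = (if b = w then 1 else 0)" by (rule compK)
  finally show ?thesis by simp
qed

lemma multJ_basis: "i < d l \<Longrightarrow> j < d l \<Longrightarrow> (\<Sum>w\<in>UNIV. MJ x y w * C l w i j) = (\<Sum>k<d l. C l x i k * C l y k j)"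
proof -
  assume X: "i < d l" "j < d l"
  define iv where "iv l' = inverse (\<pi> (f l'))" for l'
  have "(\<Sum>w\<in>UNIV. MJ x y w * C l w i j) = (\<Sum>w\<in>UNIV. \<Sum>l'\<in>UNIV. \<Sum>s<d l'. \<Sum>t<d l'. \<Sum>u<d l'. iv l' * (C l' x s t * C l' y t u) * (C l w i j * C l' (st w) u s))"
    unfolding multJ_def gam_eq iv_def st_inv by (simp add: sum_distrib_left sum_distrib_right mult_ac)
  also have "\<dots> = (\<Sum>l'\<in>UNIV. \<Sum>s<d l'. \<Sum>t<d l'. \<Sum>u<d l'. \<Sum>w\<in>UNIV. iv l' * (C l' x s t * C l' y t u) * (C l w i j * C l' (st w) u s))"
    by (rule sum_pull5)
  also have "\<dots> = (\<Sum>l'\<in>UNIV. \<Sum>s<d l'. \<Sum>t<d l'. \<Sum>u<d l'. iv l' * (C l' x s t * C l' y t u) * (\<Sum>w\<in>UNIV. C l w i j * C l' (st w) u s))"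
    by (simp add: sum_distrib_left)
  also have "\<dots> = (\<Sum>l'\<in>UNIV. \<Sum>s<d l'. \<Sum>t<d l'. \<Sum>u<d l'. iv l' * (C l' x s t * C l' y t u) * (if l = l' \<and> i = s \<and> j = u then \<pi> (f l') else 0))"
    using X by (intro sum.cong refl) (simp add: orthJ)
  also have "\<dots> = (\<Sum>t<d l. iv l * (C l x i t * C l y t j) * \<pi> (f l))"
    using X by (simp add: if_conj0 sum_if_const)
  also have "\<dots> = (\<Sum>k<d l. C l x i k * C l y k j)"
    using pif_nz[of l] by (intro sum.cong refl) (simp add: iv_def field_simps)
  finally show ?thesis .
qed

lemma multJ_rep: "i < d l \<Longrightarrow> j < d l \<Longrightarrow> repv (C l) (sprod MJ u v) i j = (\<Sum>k<d l. repv (C l) u i k * repv (C l) v k j)"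
  by (rule bilin_mult) (rule multJ_basis)

definition JEU :: "'l \<Rightarrow> nat \<Rightarrow> nat \<Rightarrow> 'b \<Rightarrow> 'f" where
  "JEU l i j = (\<lambda>w. inverse (\<pi> (f l)) * C l (st w) j i)"

lemma Cv_JEU: "i < d l \<Longrightarrow> j < d l \<Longrightarrow> k < d l' \<Longrightarrow> p < d l' \<Longrightarrow>
   repv (C l') (JEU l i j) k p = (if l' = l \<and> k = i \<and> p = j then 1 else 0)"
proof -
  assume X: "i < d l" "j < d l" "k < d l'" "p < d l'"
  have "repv (C l') (JEU l i j) k p = inverse (\<pi> (f l)) * (\<Sum>b\<in>UNIV. C l' b k p * C l (st b) j i)"
    unfolding repv_def JEU_def by (simp add: sum_distrib_left mult_ac)
  then show ?thesis using X pif_nz by (simp add: orthJ)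
qed

lemma coefJ: "u x = (\<Sum>l\<in>UNIV. inverse (\<pi> (f l)) * (\<Sum>i<d l. \<Sum>j<d l. repv (C l) u i j * C l (st x) j i))"
proof -
  have "(\<Sum>l\<in>UNIV. inverse (\<pi> (f l)) * (\<Sum>i<d l. \<Sum>j<d l. repv (C l) u i j * C l (st x) j i))
     = (\<Sum>l\<in>UNIV. \<Sum>i<d l. \<Sum>j<d l. \<Sum>w\<in>UNIV. u w * (inverse (\<pi> (f l)) * (C l w i j * C l (st x) j i)))"
    unfolding repv_def by (simp add: sum_distrib_left sum_distrib_right mult_ac)
  also have "\<dots> = (\<Sum>w\<in>UNIV. \<Sum>l\<in>UNIV. \<Sum>i<d l. \<Sum>j<d l. u w * (inverse (\<pi> (f l)) * (C l w i j * C l (st x) j i)))"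
    by (rule sum_pull4[symmetric])
  also have "\<dots> = (\<Sum>w\<in>UNIV. u w * (\<Sum>l\<in>UNIV. inverse (\<pi> (f l)) * (\<Sum>i<d l. \<Sum>j<d l. C l w i j * C l (st x) j i)))"
    by (simp add: sum_distrib_left)
  also have "\<dots> = u x" by (simp add: compJ)
  finally show ?thesis by simp
qed

sublocale J: mrep MJ d C JEU "\<lambda>l. inverse (\<pi> (f l))" st
proof
  fix i j l u v assume "i < d l" "j < d l"
  then show "repv (C l) (sprod MJ u v) i j = (\<Sum>k<d l. repv (C l) u i k * repv (C l) v k j)" by (rule multJ_rep)
next
  fix i j l p q l' assume "i < d l" "j < d l" "p < d l'" "q < d l'"
  then show "repv (C l') (JEU l i j) p q = (if l' = l \<and> p = i \<and> q = j then 1 else 0)" by (rule Cv_JEU)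
next
  fix u :: "'b \<Rightarrow> 'f" and x
  show "u x = (\<Sum>l\<in>UNIV. inverse (\<pi> (f l)) * (\<Sum>i<d l. \<Sum>j<d l. repv (C l) u i j * C l (st x) j i))" by (rule coefJ)
next
  fix l show "inverse (\<pi> (f l)) \<noteq> 0" using pif_nz by simp
qed


definition P3 :: "'l \<Rightarrow> 'b \<Rightarrow> 'b \<Rightarrow> 'b \<Rightarrow> 'k" where
  "P3 l x y w = (\<Sum>s<d l. \<Sum>t<d l. \<Sum>u<d l. rho l x s t * rho l y t u * rho l w u s)"

lemma P3_chi: "P3 l x y w = chi l (mul (mul (bvec x) (bvec y)) (bvec w))"
proof -
  have "chi l (mul (mul (bvec x) (bvec y)) (bvec w)) = (\<Sum>s<d l. \<Sum>u<d l. \<Sum>t<d l. rho l x s t * rho l y t u * rho l w u s)"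
    unfolding chi_def by (simp add: H_rep sum_distrib_right)
  also have "\<dots> = P3 l x y w"
    unfolding P3_def by (rule sum.cong[OF refl]) (rule sum.swap)
  finally show ?thesis by simp
qed

lemma P3_star: "P3 l (st y) (st x) (st w) = sc l * P3 (sig l) x y w"
proof -
  have "P3 l (st y) (st x) (st w) = chi l (mul (mul (stH (bvec y)) (stH (bvec x))) (stH (bvec w)))"
    by (simp add: P3_chi stH_bvec)
  also have "\<dots> = phi l (mul (bvec w) (mul (bvec x) (bvec y)))"
    unfolding phi_def by (simp add: stH_mul)
  also have "\<dots> = sc l * chi (sig l) (mul (bvec w) (mul (bvec x) (bvec y)))" by (rule phi_sig)
  also have "\<dots> = sc l * P3 (sig l) x y w" by (simp add: P3_chi chi_comm)
  finally show ?thesis .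
qed

lemma AAA: "(\<Sum>s<d l. \<Sum>t<d l. \<Sum>u<d l. A l x s t * A l y t u * A l w u s) = vpa l * vpa l * vpa l * P3 l x y w"
  unfolding A_def P3_def by (simp add: sum_distrib_left mult_ac)

lemma V3_in: "vpa l * vpa l * vpa l * P3 l x y w \<in> VR"
  unfolding AAA[symmetric] by (auto intro!: O_sum O_mult A_in)

lemma T_eq: "(\<Sum>s<d l. \<Sum>t<d l. \<Sum>u<d l. C l x s t * C l y t u * C l w u s) = \<pi> (vpa l * vpa l * vpa l * P3 l x y w)"
proof -
  have "(\<Sum>s<d l. \<Sum>t<d l. \<Sum>u<d l. C l x s t * C l y t u * C l w u s) = (\<Sum>s<d l. \<Sum>t<d l. \<Sum>u<d l. \<pi> (A l x s t * A l y t u * A l w u s))"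
    unfolding C_def by (intro sum.cong refl) (simp add: pi_mult A_in O_mult)
  also have "\<dots> = \<pi> (\<Sum>s<d l. \<Sum>t<d l. \<Sum>u<d l. A l x s t * A l y t u * A l w u s)"
    by (subst pi_sum3) (auto intro!: O_mult A_in)
  finally show ?thesis by (simp add: AAA)
qed

lemma gam_T: "gJ x y w = (\<Sum>l\<in>UNIV. inverse (\<pi> (f l)) * \<pi> (vpa l * vpa l * vpa l * P3 l x y w))"
  by (simp add: gam_eq T_eq)

lemma gam_sym: "gJ (st y) (st x) (st w) = gJ x y w"
proof -
  have "gJ (st y) (st x) (st w) = (\<Sum>l\<in>UNIV. inverse (\<pi> (f l)) * \<pi> (sc l * (vpa (sig l) * vpa (sig l) * vpa (sig l) * P3 (sig l) x y w)))"
    unfolding gam_T P3_star vpa_rel by (simp add: mult_ac)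
  also have "\<dots> = (\<Sum>l\<in>UNIV. inverse (\<pi> (f (sig l))) * \<pi> (vpa (sig l) * vpa (sig l) * vpa (sig l) * P3 (sig l) x y w))"
  proof (rule sum.cong[OF refl])
    fix l
    have pf: "\<pi> (f l) = \<pi> (sc l) * \<pi> (f (sig l))"
      using f_rel[of l] sc_props f_props by (simp add: pi_mult)
    show "inverse (\<pi> (f l)) * \<pi> (sc l * (vpa (sig l) * vpa (sig l) * vpa (sig l) * P3 (sig l) x y w))
        = inverse (\<pi> (f (sig l))) * \<pi> (vpa (sig l) * vpa (sig l) * vpa (sig l) * P3 (sig l) x y w)"
      using sc_props[of l] V3_in[of "sig l" x y w] pi_nz[of "sc l"] by (simp add: pi_mult pf)
  qed
  also have "\<dots> = gJ x y w"
    unfolding gam_T by (rule sum_st_reindex[of sig, OF sig_inv])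
  finally show ?thesis .
qed

lemma sum3_cyc: "(\<Sum>s\<in>S. \<Sum>t\<in>S. \<Sum>u\<in>S. F s t u) = (\<Sum>t\<in>S. \<Sum>u\<in>S. \<Sum>s\<in>S. (F s t u :: 'a::comm_monoid_add))"
  by (subst sum.swap) (rule sum.cong[OF refl], rule sum.swap)

lemma gam_cyc: "gJ x y w = gJ y w x"
  unfolding gam_eq
proof (rule sum.cong[OF refl])
  fix l
  have "(\<Sum>s<d l. \<Sum>t<d l. \<Sum>u<d l. C l x s t * C l y t u * C l w u s) = (\<Sum>t<d l. \<Sum>u<d l. \<Sum>s<d l. C l y t u * C l w u s * C l x s t)"
    by (subst sum3_cyc) (simp add: mult_ac)
  then show "inverse (\<pi> (f l)) * (\<Sum>s<d l. \<Sum>t<d l. \<Sum>u<d l. C l x s t * C l y t u * C l w u s) =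
    inverse (\<pi> (f l)) * (\<Sum>s<d l. \<Sum>t<d l. \<Sum>u<d l. C l y s t * C l w t u * C l x u s)" by simp
qed

lemma gam_nz: "gJ p q r \<noteq> 0 \<Longrightarrow> \<exists>l k i. k < d l \<and> i < d l \<and> (\<Sum>j<d l. C l p k j * C l q j i) \<noteq> 0"
proof (rule ccontr)
  assume nz: "gJ p q r \<noteq> 0" and C: "\<not> (\<exists>l k i. k < d l \<and> i < d l \<and> (\<Sum>j<d l. C l p k j * C l q j i) \<noteq> 0)"
  have inner: "(\<Sum>s<d l. \<Sum>t<d l. \<Sum>u<d l. C l p s t * C l q t u * C l r u s) = (\<Sum>s<d l. \<Sum>u<d l. (\<Sum>t<d l. C l p s t * C l q t u) * C l r u s)" for l
    by (rule sum.cong[OF refl]) (simp only: sum_distrib_right, rule sum.swap)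
  have "gJ p q r = (\<Sum>l\<in>UNIV. inverse (\<pi> (f l)) * (\<Sum>s<d l. \<Sum>u<d l. (\<Sum>t<d l. C l p s t * C l q t u) * C l r u s))"
    unfolding gam_eq inner ..
  also have "\<dots> = 0" using C by (auto intro!: sum.neutral)
  finally show False using nz by simp
qed

lemma Cpair1: "k < d l \<Longrightarrow> i < d l \<Longrightarrow> (\<Sum>j<d l. C l v k j * C l w j i) = \<pi> (vpa l * vpa l * (\<Sum>j<d l. rho l v k j * rho l w j i))"
proof -
  assume X: "k < d l" "i < d l"
  have "(\<Sum>j<d l. C l v k j * C l w j i) = (\<Sum>j<d l. \<pi> (A l v k j * A l w j i))"
    unfolding C_def using X by (intro sum.cong refl) (simp add: pi_mult A_in)
  also have "\<dots> = \<pi> (\<Sum>j<d l. A l v k j * A l w j i)"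
    using X by (subst pi_sum) (auto intro!: O_mult A_in)
  also have "(\<Sum>j<d l. A l v k j * A l w j i) = vpa l * vpa l * (\<Sum>j<d l. rho l v k j * rho l w j i)"
    unfolding A_def by (simp add: sum_distrib_left mult_ac)
  finally show ?thesis by simp
qed

lemma Cpair2: "k < d l \<Longrightarrow> j < d l \<Longrightarrow> (\<Sum>i<d l. C l v i k * C l w j i) = \<pi> (vpa l * vpa l * (\<Sum>i<d l. rho l v i k * rho l w j i))"
proof -
  assume X: "k < d l" "j < d l"
  have "(\<Sum>i<d l. C l v i k * C l w j i) = (\<Sum>i<d l. \<pi> (A l v i k * A l w j i))"
    unfolding C_def using X by (intro sum.cong refl) (simp add: pi_mult A_in)
  also have "\<dots> = \<pi> (\<Sum>i<d l. A l v i k * A l w j i)"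
    using X by (subst pi_sum) (auto intro!: O_mult A_in)
  also have "(\<Sum>i<d l. A l v i k * A l w j i) = vpa l * vpa l * (\<Sum>i<d l. rho l v i k * rho l w j i)"
    unfolding A_def by (simp add: sum_distrib_left mult_ac)
  finally show ?thesis by simp
qed

lemma C_nz: "C l v i j \<noteq> 0 \<Longrightarrow> rho l v i j \<noteq> 0"
  unfolding C_def A_def by auto

lemma stepL: "left_step MJ x y \<Longrightarrow> left_step m x y"
  unfolding J.left_iff H.left_iff using Cpair1 by fastforce

lemma stepR: "right_step MJ x y \<Longrightarrow> right_step m x y"
  unfolding J.right_iff H.right_iff using Cpair2 by fastforce

lemma stepLR: "lr_step MJ x y \<Longrightarrow> lr_step m x y"
  unfolding J.lr_iff H.lr_iff using C_nz by blast

lemma C_diag: "\<exists>l i j. i < d l \<and> j < d l \<and> C l x i j \<noteq> 0 \<and> C l (st x) j i \<noteq> 0"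
proof (rule ccontr)
  assume N: "\<not> ?thesis"
  have "(\<Sum>l\<in>UNIV. inverse (\<pi> (f l)) * (\<Sum>i<d l. \<Sum>j<d l. C l x i j * C l (st x) j i)) = 0"
    using N by (auto intro!: sum.neutral)
  then show False using compJ[of x x] by simp
qed

end

lemma tranclp_mono': "R\<^sup>+\<^sup>+ x y \<Longrightarrow> (\<And>a b. R a b \<Longrightarrow> S a b) \<Longrightarrow> S\<^sup>+\<^sup>+ x y"
  by (induction rule: tranclp_induct) (auto intro: tranclp.trancl_into_trancl)

lemma cell_mono: "cell_equiv R x y \<Longrightarrow> (\<And>a b. R a b \<Longrightarrow> S a b) \<Longrightarrow> cell_equiv S x y"
  unfolding cell_equiv_def using tranclp_mono' by metis

lemma cell_single: "R x y \<Longrightarrow> R y x \<Longrightarrow> cell_equiv R x y"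
  unfolding cell_equiv_def by auto

context tsetup
begin

lemma left_pair: "gJ x y w \<noteq> 0 \<Longrightarrow> left_cell_equiv MJ x (st y)"
proof -
  assume nz: "gJ x y w \<noteq> 0"
  have nz': "gJ (st y) (st x) (st w) \<noteq> 0" using nz by (simp add: gam_sym)
  have "left_step MJ (st y) x" unfolding J.left_iff st_inv using gam_nz[OF nz] by blast
  moreover have "left_step MJ x (st y)" unfolding J.left_iff using gam_nz[OF nz'] by blast
  ultimately show ?thesis unfolding left_cell_equiv_def by (simp add: cell_single)
qed

theorem main:
  "\<forall>x y w.
    (gJ x y w \<noteq> 0 \<longrightarrow>
       left_cell_equiv MJ x (st y) \<and>
       left_cell_equiv MJ y (st w) \<and>
       left_cell_equiv MJ w (st x)) \<and>
    (left_cell_equiv MJ x y \<longrightarrow> left_cell_equiv m x y) \<and>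
    (right_cell_equiv MJ x y \<longrightarrow> right_cell_equiv m x y) \<and>
    (lr_cell_equiv MJ x y \<longrightarrow> lr_cell_equiv m x y) \<and>
    lr_cell_equiv MJ x (st x)"
proof (intro allI conjI impI)
  fix x y w
  assume nz: "gJ x y w \<noteq> 0"
  show "left_cell_equiv MJ x (st y)" using nz by (rule left_pair)
  have "gJ y w x \<noteq> 0" using nz gam_cyc[of x y w] by simp
  then show "left_cell_equiv MJ y (st w)" by (rule left_pair)
  have "gJ w x y \<noteq> 0" using nz gam_cyc[of x y w] gam_cyc[of y w x] by simp
  then show "left_cell_equiv MJ w (st x)" by (rule left_pair)
next
  fix x y
  assume "left_cell_equiv MJ x y" then show "left_cell_equiv m x y"
    unfolding left_cell_equiv_def by (rule cell_mono) (rule stepL)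
next
  fix x y
  assume "right_cell_equiv MJ x y" then show "right_cell_equiv m x y"
    unfolding right_cell_equiv_def by (rule cell_mono) (rule stepR)
next
  fix x y
  assume "lr_cell_equiv MJ x y" then show "lr_cell_equiv m x y"
    unfolding lr_cell_equiv_def by (rule cell_mono) (rule stepLR)
next
  fix x
  obtain l i j where X: "i < d l" "j < d l" "C l x i j \<noteq> 0" "C l (st x) j i \<noteq> 0" using C_diag by blast
  have "lr_step MJ x (st x)" unfolding J.lr_iff using X by blast
  moreover have "lr_step MJ (st x) x" unfolding J.lr_iff st_inv using X by blast
  ultimately show "lr_cell_equiv MJ x (st x)" unfolding lr_cell_equiv_def by (simp add: cell_single)
qed

end

theorem mainTheorem10:
  fixes \<nu> :: "'k::field \<Rightarrow> 'g::linordered_ab_group_add"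
    and \<pi> :: "'k \<Rightarrow> 'f::field"
    and m :: "'b::finite \<Rightarrow> 'b \<Rightarrow> 'b \<Rightarrow> 'k"
    and st :: "'b \<Rightarrow> 'b"
    and tau :: "'b \<Rightarrow> 'k"
    and d :: "'l::finite \<Rightarrow> nat"
    and rho :: "'l \<Rightarrow> 'b \<Rightarrow> nat \<Rightarrow> nat \<Rightarrow> 'k"
    and c :: "'l \<Rightarrow> 'k"
    and a :: "'l \<Rightarrow> 'g"
    and vp :: "'g \<Rightarrow> 'k"
  assumes val: "valuation \<nu>"
    and res: "residue_map \<nu> \<pi>"
    and freal: "formally_real TYPE('f)"
    and alg: "is_assoc_unital m"
    and st_inv: "\<And>b. st (st b) = b"
    and st_anti: "\<And>b b' e. m b b' e = m (st b') (st b) (st e)"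
    and tau_sym: "\<And>u v. tauH tau (sprod m u v) = tauH tau (sprod m v u)"
    and B_dual: "\<And>b b'. tauH tau (sprod m (bvec b) (bvec (st b'))) = (if b = b' then 1 else 0)"
    and reps: "\<And>l. is_rep m (d l) (rho l)"
    and wed: "wedderburn d rho"
    and schur_nz: "\<And>l. c l \<noteq> 0"
    and schur: "\<And>b. tau b = (\<Sum>l\<in>UNIV. inverse (c l) * (\<Sum>i<d l. rho l b i i))"
    and a_def: "\<And>l. a l + a l = - \<nu> (c l)"
    and vp_hom: "\<And>x y. x \<in> gen_subgroup (range a) \<Longrightarrow> y \<in> gen_subgroup (range a) \<Longrightarrow>
                   vp (x + y) = vp x * vp y"
    and vp_val: "\<And>x. x \<in> gen_subgroup (range a) \<Longrightarrow> vp x \<noteq> 0 \<and> \<nu> (vp x) = x"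
    and balanced: "\<And>l S s i j. star_sym_basis m tau st S \<Longrightarrow> s \<in> S \<Longrightarrow> i < d l \<Longrightarrow> j < d l \<Longrightarrow>
                   repv (rho l) s i j = 0 \<or> - a l \<le> \<nu> (repv (rho l) s i j)"
  shows "\<forall>x y z.
    (gammaJ vp \<pi> a c d rho x y z \<noteq> 0 \<longrightarrow>
       left_cell_equiv (multJ vp \<pi> a c d rho st) x (st y) \<and>
       left_cell_equiv (multJ vp \<pi> a c d rho st) y (st z) \<and>
       left_cell_equiv (multJ vp \<pi> a c d rho st) z (st x)) \<and>
    (left_cell_equiv (multJ vp \<pi> a c d rho st) x y \<longrightarrow> left_cell_equiv m x y) \<and>
    (right_cell_equiv (multJ vp \<pi> a c d rho st) x y \<longrightarrow> right_cell_equiv m x y) \<and>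
    (lr_cell_equiv (multJ vp \<pi> a c d rho st) x y \<longrightarrow> lr_cell_equiv m x y) \<and>
    lr_cell_equiv (multJ vp \<pi> a c d rho st) x (st x)"
proof -
  interpret tsetup \<nu> \<pi> m st tau d rho c a vp
    by (rule tsetup.intro[OF valres.intro[OF val res freal] tsetup_axioms.intro[OF alg st_inv st_anti B_dual reps wed schur_nz schur a_def vp_hom vp_val balanced]])
  show ?thesis by (rule main)
qed

end
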